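(* Let $k$ be a difference field and $D$ a finitely generated difference $k$-algebra which is an integral domain. Then for some $n$, $\sigma^n(D)$ is a difference domain (i.e. $\sigma$ is injective on $\sigma^n(D)$). In fact, if $R$ is a finitely generated $k$-subalgebra of $D$ generating $D$ as a difference ring, and $b$ is the dimension growth degree of $D$ with respect to $R$, then one can take $n\le b$.
   Context: A difference $k$-algebra is a $k$-algebra with an endomorphism $\sigma$ extending that of $k$. For $R$ as in the statement, let $R_m$ be the subring of $D$ generated by $R\cup\sigma(R)\cup\dots\cup\sigma^{m-1}(R)$ and $c(m)$ the transcendence degree over $k$ of its fraction field; there are integers $a,b$ with $c(m)=am+b$ for all sufficiently large $m$, and $b$ is called the dimension growth degree. *)

theory Defs
  imports Main "HOL-Computational_Algebra.Fraction_Field"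
begin

definition is_subring :: "'d::comm_ring_1 set \<Rightarrow> bool" where
  "is_subring S \<longleftrightarrow> 0 \<in> S \<and> 1 \<in> S \<and> (\<forall>x\<in>S. \<forall>y\<in>S. x + y \<in> S \<and> x * y \<in> S \<and> - x \<in> S)"

definition ring_gen :: "'d::comm_ring_1 set \<Rightarrow> 'd set" where
  "ring_gen A = \<Inter> {S. A \<subseteq> S \<and> is_subring S}"

definition is_subfield :: "'d::idom set \<Rightarrow> bool" where
  "is_subfield K \<longleftrightarrow> is_subring K \<and> (\<forall>x\<in>K. x \<noteq> 0 \<longrightarrow> (\<exists>y\<in>K. x * y = 1))"

definition ring_endo :: "('d::comm_ring_1 \<Rightarrow> 'd) \<Rightarrow> bool" where
  "ring_endo \<sigma> \<longleftrightarrow> \<sigma> 1 = 1 \<and> (\<forall>x y. \<sigma> (x + y) = \<sigma> x + \<sigma> y \<and> \<sigma> (x * y) = \<sigma> x * \<sigma> y)"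

text \<open>Polynomials are finitely supported maps from exponent vectors (supported in X) to F.\<close>
definition alg_indep :: "'f::field set \<Rightarrow> 'f set \<Rightarrow> bool" where
  "alg_indep F X \<longleftrightarrow> finite X \<and>
     (\<forall>c :: ('f \<Rightarrow> nat) \<Rightarrow> 'f.
        finite {e. c e \<noteq> 0} \<and> (\<forall>e. c e \<in> F) \<and>
        (\<forall>e. c e \<noteq> 0 \<longrightarrow> (\<forall>x. x \<notin> X \<longrightarrow> e x = 0)) \<and>
        (\<Sum>e | c e \<noteq> 0. c e * (\<Prod>x\<in>X. x ^ e x)) = 0
        \<longrightarrow> (\<forall>e. c e = 0))"

definition trdeg :: "'f::field set \<Rightarrow> 'f set \<Rightarrow> nat" where
  "trdeg F L = Sup {card X | X. X \<subseteq> L \<and> alg_indep F X}"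

definition frac_of :: "'d::idom set \<Rightarrow> 'd fract set" where
  "frac_of A = {Fract a b | a b. a \<in> A \<and> b \<in> A \<and> b \<noteq> 0}"

definition R_m :: "('d::comm_ring_1 \<Rightarrow> 'd) \<Rightarrow> 'd set \<Rightarrow> nat \<Rightarrow> 'd set" where
  "R_m \<sigma> R m = ring_gen (\<Union>i<m. (\<sigma> ^^ i) ` R)"

definition dim_c :: "'d::idom set \<Rightarrow> ('d \<Rightarrow> 'd) \<Rightarrow> 'd set \<Rightarrow> nat \<Rightarrow> nat" where
  "dim_c K \<sigma> R m = trdeg ((\<lambda>x. Fract x 1) ` K) (frac_of (R_m \<sigma> R m))"

end

theory Submission
  imports Defs "HOL-Library.FuncSet"
begin

section \<open>Spans\<close>

inductive_set spn :: "'a::comm_ring_1 set \<Rightarrow> 'a set \<Rightarrow> 'a set" for C B where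
  spn_zero: "0 \<in> spn C B"
| spn_base: "c \<in> C \<Longrightarrow> b \<in> B \<Longrightarrow> c * b \<in> spn C B"
| spn_add: "x \<in> spn C B \<Longrightarrow> y \<in> spn C B \<Longrightarrow> x + y \<in> spn C B"

definition setmul :: "'a::comm_ring_1 set \<Rightarrow> 'a set \<Rightarrow> 'a set" where
  "setmul A B = {a * b | a b. a \<in> A \<and> b \<in> B}"

lemma subringD:
  assumes "is_subring C"
  shows "0 \<in> C" "1 \<in> C" "x \<in> C \<Longrightarrow> y \<in> C \<Longrightarrow> x + y \<in> C"
    "x \<in> C \<Longrightarrow> y \<in> C \<Longrightarrow> x * y \<in> C" "x \<in> C \<Longrightarrow> - x \<in> C"
  using assms unfolding is_subring_def by auto

lemma subring_diff: "is_subring C \<Longrightarrow> x \<in> C \<Longrightarrow> y \<in> C \<Longrightarrow> x - y \<in> C"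
  using subringD[of C] by (metis diff_conv_add_uminus)

lemma subring_sum: "is_subring C \<Longrightarrow> (\<And>i. i \<in> I \<Longrightarrow> f i \<in> C) \<Longrightarrow> sum f I \<in> C"
  by (induction I rule: infinite_finite_induct) (auto intro: subringD)

lemma subring_prod: "is_subring C \<Longrightarrow> (\<And>i. i \<in> I \<Longrightarrow> f i \<in> C) \<Longrightarrow> prod f I \<in> C"
  by (induction I rule: infinite_finite_induct) (auto intro: subringD)

lemma subring_power: "is_subring C \<Longrightarrow> x \<in> C \<Longrightarrow> x ^ n \<in> C"
  by (induction n) (auto intro: subringD)

lemma spn_smult:
  assumes C: "is_subring C" and c: "c \<in> C" and x: "x \<in> spn C B"
  shows "c * x \<in> spn C B"
  using x
proof induction
  case spn_zero then show ?case by (simp add: spn.spn_zero)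
next
  case (spn_base c' b)
  have "c * (c' * b) = (c * c') * b" by (simp add: mult.assoc)
  then show ?case using spn.spn_base[of "c * c'" C b B] subringD(4)[OF C c spn_base(1)] spn_base(2) by metis
next
  case (spn_add x y) then show ?case by (simp add: distrib_left spn.spn_add)
qed

lemma spn_uminus: "is_subring C \<Longrightarrow> x \<in> spn C B \<Longrightarrow> - x \<in> spn C B"
  using spn_smult[of C "-1" x B] subringD[of C] by simp

lemma spn_diff: "is_subring C \<Longrightarrow> x \<in> spn C B \<Longrightarrow> y \<in> spn C B \<Longrightarrow> x - y \<in> spn C B"
  using spn_uminus spn.spn_add by (metis diff_conv_add_uminus)

lemma spn_mono: assumes "B \<subseteq> B'" "x \<in> spn C B" shows "x \<in> spn C B'"
  using assms(2) by induction (use assms(1) in \<open>auto intro: spn.intros\<close>)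

lemma spn_sub:
  assumes C: "is_subring C" and "B \<subseteq> spn C B'" and "x \<in> spn C B"
  shows "x \<in> spn C B'"
  using assms(3)
  by (induction rule: spn.induct) (use assms in \<open>auto intro: spn.intros spn_smult\<close>)

lemma spn_baseI: "is_subring C \<Longrightarrow> b \<in> B \<Longrightarrow> b \<in> spn C B"
  using spn.spn_base[of 1 C b B] subringD(2)[of C] by simp

lemma spn_sum: "(\<And>i. i \<in> I \<Longrightarrow> f i \<in> spn C B) \<Longrightarrow> sum f I \<in> spn C B"
  by (induction I rule: infinite_finite_induct) (auto intro: spn.intros)

lemma spn_empty: "x \<in> spn C {} \<Longrightarrow> x = 0"
  by (induction rule: spn.induct) auto

lemma spn_mult:
  assumes C: "is_subring C" and x: "x \<in> spn C A" and y: "y \<in> spn C B"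
  shows "x * y \<in> spn C (setmul A B)"
  using x
proof induction
  case spn_zero then show ?case by (simp add: spn.spn_zero)
next
  case (spn_base c a)
  have "c * a * y \<in> spn C (setmul A B)" using y
  proof induction
    case spn_zero then show ?case by (simp add: spn.spn_zero)
  next
    case (spn_base c' b)
    have "c * a * (c' * b) = (c * c') * (a * b)" by (simp add: ac_simps)
    moreover have "a * b \<in> setmul A B" using spn_base \<open>a \<in> A\<close> unfolding setmul_def by blast
    ultimately show ?case using spn.spn_base subringD(4)[OF C \<open>c \<in> C\<close> \<open>c' \<in> C\<close>] by metis
  next
    case (spn_add x y) then show ?case by (simp add: distrib_left spn.spn_add)
  qed
  then show ?case by simp
next
  case (spn_add x1 x2) then show ?case by (simp add: distrib_right spn.spn_add)
qed

lemma spn_insert_decomp: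
  assumes C: "is_subring C" and "x \<in> spn C (insert b B)"
  shows "\<exists>a\<in>C. \<exists>w\<in>spn C B. x = a * b + w"
  using assms(2)
proof induction
  case spn_zero then show ?case using subringD[OF C] spn.spn_zero by (metis add_0 mult_zero_left)
next
  case (spn_base c b')
  show ?case
  proof (cases "b' = b")
    case True then show ?thesis using spn_base spn.spn_zero by force
  next
    case False then have "b' \<in> B" using spn_base by auto
    then show ?thesis using spn_base spn.spn_base[of c C b' B] subringD[OF C] by (metis add_0 mult_zero_left)
  qed
next
  case (spn_add x y)
  then obtain a1 w1 a2 w2 where "a1 \<in> C" "w1 \<in> spn C B" "x = a1 * b + w1"
    "a2 \<in> C" "w2 \<in> spn C B" "y = a2 * b + w2" by blast
  then show ?case
    by (intro bexI[of _ "a1 + a2"] bexI[of _ "w1 + w2"]) (auto simp: algebra_simps intro: spn.spn_add subringD[OF C])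
qed

section \<open>Linear dependence\<close>

lemma subfield_subring: "is_subfield F \<Longrightarrow> is_subring F"
  by (simp add: is_subfield_def)

lemma subfield_inverse:
  fixes F :: "'f::field set"
  assumes "is_subfield F" "x \<in> F"
  shows "inverse x \<in> F"
proof (cases "x = 0")
  case True then show ?thesis using assms subringD subfield_subring by fastforce
next
  case False
  then obtain y where "y \<in> F" "x * y = 1" using assms unfolding is_subfield_def by blast
  then have "y = inverse x" using False by (metis inverse_unique)
  then show ?thesis using \<open>y \<in> F\<close> by simp
qed

lemma subfield_divide:
  fixes F :: "'f::field set"
  assumes "is_subfield F" "x \<in> F" "y \<in> F"
  shows "x / y \<in> F"
  using assms subfield_inverse[OF assms(1) assms(3)] subringD(4)[OF subfield_subring[OF assms(1)]]
  by (simp add: divide_inverse)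

lemma lin_dep:
  fixes F :: "'f::field set"
  assumes Fs: "is_subfield F" and "finite B"
  shows "finite E \<Longrightarrow> card B < card E \<Longrightarrow> (\<forall>e\<in>E. v e \<in> spn F B) \<Longrightarrow>
     \<exists>k. (\<forall>e\<in>E. k e \<in> F) \<and> (\<exists>e\<in>E. k e \<noteq> 0) \<and> (\<Sum>e\<in>E. k e * v e) = 0"
  using assms(2)
proof (induction B arbitrary: E v rule: finite_induct)
  have C: "is_subring F" using Fs by (rule subfield_subring)
  case empty
  then obtain e0 where "e0 \<in> E" by fastforce
  have v0: "\<forall>e\<in>E. v e = 0" using empty spn_empty by blast
  show ?case
    by (rule exI[of _ "\<lambda>e. if e = e0 then 1 else 0"]) (use \<open>e0 \<in> E\<close> v0 subringD[OF C] in auto)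
next
  have C: "is_subring F" using Fs by (rule subfield_subring)
  case (insert b B E v)
  have "\<forall>e\<in>E. \<exists>a\<in>F. \<exists>w\<in>spn F B. v e = a * b + w"
    using insert.prems(3) spn_insert_decomp[OF C] by blast
  then obtain a w where aw: "\<forall>e\<in>E. a e \<in> F \<and> w e \<in> spn F B \<and> v e = a e * b + w e"
    by metis
  show ?case
  proof (cases "\<forall>e\<in>E. a e = 0")
    case True
    then have "\<forall>e\<in>E. v e \<in> spn F B" using aw by simp
    moreover have "card B < card E" using insert by simp
    ultimately show ?thesis using insert.IH insert.prems by blast
  next
    case False
    then obtain e0 where e0: "e0 \<in> E" "a e0 \<noteq> 0" by blast
    define E' where "E' = E - {e0}"
    define u where "u e = w e - (a e / a e0) * w e0" for e
    have cardE': "card B < card E'" using insert e0 unfolding E'_def by auto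
    have uB: "\<forall>e\<in>E'. u e \<in> spn F B"
    proof
      fix e assume "e \<in> E'"
      then have "e \<in> E" unfolding E'_def by auto
      have "(a e / a e0) * w e0 \<in> spn F B"
        using aw e0 \<open>e \<in> E\<close> by (intro spn_smult[OF C] subfield_divide[OF Fs]) auto
      then show "u e \<in> spn F B" unfolding u_def using aw \<open>e \<in> E\<close> by (intro spn_diff[OF C]) auto
    qed
    obtain k' where k': "\<forall>e\<in>E'. k' e \<in> F" "\<exists>e\<in>E'. k' e \<noteq> 0" "(\<Sum>e\<in>E'. k' e * u e) = 0"
      using insert.IH[OF _ cardE' uB] insert.prems(1) unfolding E'_def by auto
    have uv: "u e = v e - (a e / a e0) * v e0" if "e \<in> E" for e
      using aw that e0 unfolding u_def by (auto simp: field_simps)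
    define k where "k e = (if e = e0 then - (\<Sum>e'\<in>E'. k' e' * (a e' / a e0)) else k' e)" for e
    have fin: "finite E'" using insert.prems unfolding E'_def by auto
    have "(\<Sum>e\<in>E. k e * v e) = k e0 * v e0 + (\<Sum>e\<in>E'. k e * v e)"
      unfolding E'_def using e0 insert.prems(1) by (simp add: sum.remove)
    also have "(\<Sum>e\<in>E'. k e * v e) = (\<Sum>e\<in>E'. k' e * v e)"
      unfolding k_def E'_def by (intro sum.cong) auto
    also have "k e0 * v e0 = - (\<Sum>e'\<in>E'. k' e' * (a e' / a e0) * v e0)"
      unfolding k_def by (simp add: sum_distrib_right)
    also have "- (\<Sum>e'\<in>E'. k' e' * (a e' / a e0) * v e0) + (\<Sum>e\<in>E'. k' e * v e)
        = (\<Sum>e\<in>E'. k' e * (v e - (a e / a e0) * v e0))"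
      by (simp add: sum_subtractf[symmetric] algebra_simps)
    also have "\<dots> = (\<Sum>e\<in>E'. k' e * u e)"
      using uv unfolding E'_def by (intro sum.cong) auto
    finally have sum0: "(\<Sum>e\<in>E. k e * v e) = 0" using k' by simp
    have kF: "\<forall>e\<in>E. k e \<in> F"
      unfolding k_def using k' aw e0 unfolding E'_def
      by (auto intro!: subringD[OF C] subring_sum[OF C] subfield_divide[OF Fs])
    have "\<exists>e\<in>E. k e \<noteq> 0" using k' unfolding k_def E'_def by auto
    then show ?thesis using sum0 kF by blast
  qed
qed

section \<open>Monomials\<close>

definition mnm :: "'a::comm_ring_1 set \<Rightarrow> ('a \<Rightarrow> nat) \<Rightarrow> 'a" where
  "mnm X e = (\<Prod>x\<in>X. x ^ e x)"

definition expo :: "'a set \<Rightarrow> nat \<Rightarrow> ('a \<Rightarrow> nat) set" where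
  "expo X D = PiE X (\<lambda>_. {..D})"

definition Mon :: "'a::comm_ring_1 set \<Rightarrow> nat \<Rightarrow> 'a set" where
  "Mon X D = mnm X ` expo X D"

definition indepM :: "'a::comm_ring_1 set \<Rightarrow> 'a set \<Rightarrow> bool" where
  "indepM C X \<longleftrightarrow> finite X \<and> (\<forall>D k. (\<forall>e\<in>expo X D. k e \<in> C) \<and> (\<Sum>e\<in>expo X D. k e * mnm X e) = 0
      \<longrightarrow> (\<forall>e\<in>expo X D. k e = 0))"

lemma finite_expo: "finite X \<Longrightarrow> finite (expo X D)"
  unfolding expo_def by (auto intro: finite_PiE)

lemma card_expo: "finite X \<Longrightarrow> card (expo X D) = (D + 1) ^ card X"
  unfolding expo_def by (simp add: card_PiE)

lemma finite_Mon: "finite X \<Longrightarrow> finite (Mon X D)"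
  unfolding Mon_def by (simp add: finite_expo)

lemma card_Mon: "finite X \<Longrightarrow> card (Mon X D) \<le> (D + 1) ^ card X"
  unfolding Mon_def using card_image_le[OF finite_expo[of X D], of "mnm X"] card_expo by metis

lemma mnm_cong: "(\<And>x. x \<in> X \<Longrightarrow> e x = e' x) \<Longrightarrow> mnm X e = mnm X e'"
  unfolding mnm_def by (auto intro: prod.cong)

lemma expo_mono: "D \<le> D' \<Longrightarrow> expo X D \<subseteq> expo X D'"
  unfolding expo_def by (auto simp: PiE_def Pi_def)

lemma Mon_mono: "D \<le> D' \<Longrightarrow> Mon X D \<subseteq> Mon X D'"
  unfolding Mon_def using expo_mono by blast

lemma Mon_mult: "m \<in> Mon X a \<Longrightarrow> m' \<in> Mon X b \<Longrightarrow> m * m' \<in> Mon X (a + b)"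
proof -
  assume "m \<in> Mon X a" "m' \<in> Mon X b"
  then obtain e e' where e: "e \<in> expo X a" "m = mnm X e" and e': "e' \<in> expo X b" "m' = mnm X e'"
    unfolding Mon_def by auto
  define f where "f = restrict (\<lambda>x. e x + e' x) X"
  have "f \<in> expo X (a + b)" using e e' unfolding f_def expo_def by (auto simp: PiE_def Pi_def add_mono)
  moreover have "mnm X f = m * m'"
    unfolding e e' mnm_def f_def by (simp add: power_add prod.distrib)
  ultimately show ?thesis unfolding Mon_def by (metis image_eqI)
qed

lemma one_Mon: "1 \<in> Mon X 0"
proof -
  have "restrict (\<lambda>_. 0) X \<in> expo X 0" unfolding expo_def by auto
  moreover have "mnm X (restrict (\<lambda>_. 0) X) = 1" unfolding mnm_def by simp
  ultimately show ?thesis unfolding Mon_def by (metis image_eqI)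
qed

lemma var_Mon: assumes "finite X" "x \<in> X" shows "x \<in> Mon X 1"
proof -
  define f where "f = restrict (\<lambda>y. if y = x then 1 else 0::nat) X"
  have "f \<in> expo X 1" unfolding expo_def f_def by auto
  moreover have "mnm X f = x"
  proof -
    have "mnm X f = (\<Prod>y\<in>X. if y = x then y else 1)"
      unfolding mnm_def f_def by (intro prod.cong) auto
    also have "\<dots> = x" using assms by (simp add: prod.delta')
    finally show ?thesis .
  qed
  ultimately show ?thesis unfolding Mon_def by (metis image_eqI)
qed

lemma Mon_sub: assumes "finite X'" "X \<subseteq> X'" shows "Mon X D \<subseteq> Mon X' D"
proof
  fix m assume "m \<in> Mon X D"
  then obtain e where e: "e \<in> expo X D" "m = mnm X e" unfolding Mon_def by auto
  define f where "f = restrict (\<lambda>y. if y \<in> X then e y else 0) X'"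
  have "f \<in> expo X' D" using e unfolding expo_def f_def by (auto simp: PiE_def Pi_def)
  moreover have "mnm X' f = m"
  proof -
    have "mnm X' f = (\<Prod>y\<in>X'. if y \<in> X then y ^ e y else 1)"
      unfolding mnm_def f_def by (intro prod.cong) auto
    also have "\<dots> = (\<Prod>y\<in>X. y ^ e y)"
      using assms by (simp add: prod.If_cases Int_absorb1)
    finally show ?thesis unfolding e mnm_def .
  qed
  ultimately show "m \<in> Mon X' D" unfolding Mon_def by (metis image_eqI)
qed

lemma spn_Mon_mult:
  assumes C: "is_subring C" "x \<in> spn C (Mon X a)" "y \<in> spn C (Mon X b)"
  shows "x * y \<in> spn C (Mon X (a + b))"
proof -
  have "x * y \<in> spn C (setmul (Mon X a) (Mon X b))" by (rule spn_mult[OF assms])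
  moreover have "setmul (Mon X a) (Mon X b) \<subseteq> Mon X (a + b)"
    unfolding setmul_def using Mon_mult by blast
  ultimately show ?thesis using spn_mono by blast
qed

section \<open>Algebraic independence via monomials\<close>

definition extz :: "'a set \<Rightarrow> ('a \<Rightarrow> nat) \<Rightarrow> ('a \<Rightarrow> nat)" where
  "extz X e = (\<lambda>x. if x \<in> X then e x else 0)"

lemma alg_indep_imp_indepM:
  fixes F :: "'f::field set"
  assumes C: "is_subring F" and ai: "alg_indep F Z"
  shows "indepM F Z"
proof -
  have fin: "finite Z" using ai unfolding alg_indep_def by simp
  show ?thesis unfolding indepM_def
  proof (intro conjI fin allI impI)
    fix D k assume H: "(\<forall>e\<in>expo Z D. k e \<in> F) \<and> (\<Sum>e\<in>expo Z D. k e * mnm Z e) = 0"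
    let ?E = "expo Z D"
    define c where "c e' = (if e' \<in> extz Z ` ?E then k (restrict e' Z) else 0)" for e'
    have inj: "inj_on (extz Z) ?E"
      unfolding expo_def extz_def
      by (rule inj_onI) (auto simp: PiE_def extensional_def fun_eq_iff split: if_splits, metis)
    have re: "restrict (extz Z e) Z = e" if "e \<in> ?E" for e
      using that unfolding expo_def extz_def by (auto simp: PiE_def extensional_def fun_eq_iff)
    have supp: "{e. c e \<noteq> 0} \<subseteq> extz Z ` ?E" unfolding c_def by auto
    have finE: "finite (extz Z ` ?E)" using finite_expo[OF fin] by simp
    have "(\<Sum>e | c e \<noteq> 0. c e * (\<Prod>x\<in>Z. x ^ e x)) = (\<Sum>e\<in>extz Z ` ?E. c e * (\<Prod>x\<in>Z. x ^ e x))"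
      by (rule sum.mono_neutral_left[OF finE supp]) auto
    also have "\<dots> = (\<Sum>e\<in>?E. c (extz Z e) * (\<Prod>x\<in>Z. x ^ extz Z e x))"
      by (rule sum.reindex[OF inj, unfolded comp_def])
    also have "\<dots> = (\<Sum>e\<in>?E. k e * mnm Z e)"
      unfolding c_def mnm_def using re by (intro sum.cong refl) (auto simp: extz_def intro!: prod.cong)
    finally have sum0: "(\<Sum>e | c e \<noteq> 0. c e * (\<Prod>x\<in>Z. x ^ e x)) = 0" using H by simp
    have "finite {e. c e \<noteq> 0}" using finite_subset[OF supp finE] .
    moreover have "\<forall>e. c e \<in> F" unfolding c_def using H re subringD(1)[OF C] by auto
    moreover have "\<forall>e. c e \<noteq> 0 \<longrightarrow> (\<forall>x. x \<notin> Z \<longrightarrow> e x = 0)"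
      unfolding c_def extz_def by auto
    ultimately have "\<forall>e. c e = 0" using ai sum0 unfolding alg_indep_def by blast
    then show "\<forall>e\<in>?E. k e = 0" unfolding c_def using re by (metis image_eqI)
  qed
qed

lemma indepM_imp_alg_indep:
  fixes F :: "'f::field set"
  assumes C: "is_subring F" and im: "indepM F Z"
  shows "alg_indep F Z"
proof -
  have fin: "finite Z" using im unfolding indepM_def by simp
  show ?thesis unfolding alg_indep_def
  proof (rule conjI[OF fin], rule allI, rule impI)
    fix c :: "('f \<Rightarrow> nat) \<Rightarrow> 'f"
    assume H: "finite {e. c e \<noteq> 0} \<and> (\<forall>e. c e \<in> F) \<and> (\<forall>e. c e \<noteq> 0 \<longrightarrow> (\<forall>x. x \<notin> Z \<longrightarrow> e x = 0)) \<and>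
        (\<Sum>e | c e \<noteq> 0. c e * (\<Prod>x\<in>Z. x ^ e x)) = 0"
    let ?S = "{e. c e \<noteq> 0}"
    define D where "D = Max (insert 0 {e x | e x. e \<in> ?S \<and> x \<in> Z})"
    have finS: "finite ?S" using H by simp
    have finV: "finite {e x | e x. e \<in> ?S \<and> x \<in> Z}"
    proof -
      have "{e x | e x. e \<in> ?S \<and> x \<in> Z} = (\<lambda>(e, x). e x) ` (?S \<times> Z)" by auto
      then show ?thesis using finS fin by simp
    qed
    have Dle: "e x \<le> D" if "e \<in> ?S" "x \<in> Z" for e x
      unfolding D_def using finV that by (intro Max_ge) auto
    let ?E = "expo Z D"
    define k where "k e = c (extz Z e)" for e
    have inj: "inj_on (\<lambda>e. restrict e Z) ?S"
    proof (rule inj_onI)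
      fix e e' assume "e \<in> ?S" "e' \<in> ?S" "restrict e Z = restrict e' Z"
      show "e = e'"
      proof
        fix x show "e x = e' x"
        proof (cases "x \<in> Z")
          case True then show ?thesis using \<open>restrict e Z = restrict e' Z\<close> by (metis restrict_apply')
        next
          case False
          have "c e \<noteq> 0" "c e' \<noteq> 0" using \<open>e \<in> ?S\<close> \<open>e' \<in> ?S\<close> by auto
          then have "e x = 0" "e' x = 0" using H False by blast+
          then show ?thesis by simp
        qed
      qed
    qed
    have ext_re: "extz Z (restrict e Z) = e" if "e \<in> ?S" for e
      using that H unfolding extz_def by (auto simp: fun_eq_iff)
    have sub: "(\<lambda>e. restrict e Z) ` ?S \<subseteq> ?E"
      unfolding expo_def using Dle by auto
    have "(\<Sum>e\<in>?E. k e * mnm Z e) = (\<Sum>e\<in>(\<lambda>e. restrict e Z) ` ?S. k e * mnm Z e)"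
    proof (rule sum.mono_neutral_right[OF finite_expo[OF fin] sub], rule ballI)
      fix e assume e: "e \<in> ?E - (\<lambda>e. restrict e Z) ` ?S"
      have "c (extz Z e) = 0"
      proof (rule ccontr)
        assume "c (extz Z e) \<noteq> 0"
        then have "restrict (extz Z e) Z \<in> (\<lambda>e. restrict e Z) ` ?S" by auto
        moreover have "restrict (extz Z e) Z = e"
          using e unfolding expo_def extz_def by (auto simp: PiE_def extensional_def fun_eq_iff)
        ultimately show False using e by auto
      qed
      then show "k e * mnm Z e = 0" unfolding k_def by simp
    qed
    also have "\<dots> = (\<Sum>e\<in>?S. k (restrict e Z) * mnm Z (restrict e Z))"
      by (rule sum.reindex[OF inj, unfolded comp_def])
    also have "\<dots> = (\<Sum>e\<in>?S. c e * (\<Prod>x\<in>Z. x ^ e x))"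
      unfolding k_def mnm_def using ext_re by (intro sum.cong refl) (auto intro!: prod.cong)
    finally have "(\<Sum>e\<in>?E. k e * mnm Z e) = 0" using H by simp
    moreover have "\<forall>e\<in>?E. k e \<in> F" unfolding k_def using H by auto
    ultimately have k0: "\<forall>e\<in>?E. k e = 0" using im unfolding indepM_def by blast
    have "?S = {}"
    proof (rule ccontr)
      assume "?S \<noteq> {}"
      then obtain e where e: "e \<in> ?S" by blast
      then have "restrict e Z \<in> ?E" using sub by auto
      then have "k (restrict e Z) = 0" using k0 by auto
      then show False using e ext_re unfolding k_def by auto
    qed
    then show "\<forall>e. c e = 0" by auto
  qed
qed

lemma indepMD:
  assumes "indepM C X" "\<forall>e\<in>expo X D. k e \<in> C" "(\<Sum>e\<in>expo X D. k e * mnm X e) = 0" "e \<in> expo X D"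
  shows "k e = 0"
  using assms unfolding indepM_def by blast

lemma expo_insert: "expo (insert p X) D = (\<lambda>(y, g). g(p := y)) ` ({..D} \<times> expo X D)"
  unfolding expo_def by (rule PiE_insert_eq)

lemma sum_expo_insert:
  assumes "p \<notin> X"
  shows "(\<Sum>e\<in>expo (insert p X) D. f e) = (\<Sum>j\<le>D. \<Sum>e\<in>expo X D. f (e(p := j)))"
proof -
  have inj: "inj_on (\<lambda>(y, g). g(p := y)) ({..D} \<times> expo X D)"
    unfolding expo_def using inj_combinator[OF assms, of "\<lambda>_. {..D}"] by simp
  have "(\<Sum>e\<in>expo (insert p X) D. f e) = (\<Sum>(j, e)\<in>{..D} \<times> expo X D. f (e(p := j)))"
    unfolding expo_insert by (subst sum.reindex[OF inj]) (simp add: case_prod_unfold comp_def)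
  also have "\<dots> = (\<Sum>j\<le>D. \<Sum>e\<in>expo X D. f (e(p := j)))"
    by (rule sum.cartesian_product[symmetric])
  finally show ?thesis .
qed

lemma mnm_insert_upd:
  assumes "p \<notin> X" "finite X"
  shows "mnm (insert p X) (e(p := j)) = p ^ j * mnm X e"
proof -
  have "mnm (insert p X) (e(p := j)) = p ^ j * (\<Prod>x\<in>X. x ^ (e(p := j)) x)"
    unfolding mnm_def using assms by simp
  also have "(\<Prod>x\<in>X. x ^ (e(p := j)) x) = mnm X e"
    unfolding mnm_def using assms by (intro prod.cong) auto
  finally show ?thesis .
qed

lemma expo_upd: "e \<in> expo X D \<Longrightarrow> j \<le> D \<Longrightarrow> e(p := j) \<in> expo (insert p X) D"
  unfolding expo_insert by force

lemma expo_insert_cases: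
  assumes "e \<in> expo (insert p X) D"
  obtains j e' where "j \<le> D" "e' \<in> expo X D" "e = e'(p := j)"
  using assms unfolding expo_insert by auto

lemma slice_sum:
  assumes "p \<notin> X" "finite X"
  shows "(\<Sum>e\<in>expo (insert p X) D. k e * mnm (insert p X) e)
     = (\<Sum>j\<le>D. p ^ j * (\<Sum>e\<in>expo X D. k (e(p := j)) * mnm X e))"
  unfolding sum_expo_insert[OF assms(1)] mnm_insert_upd[OF assms]
  by (simp add: sum_distrib_left ac_simps)

section \<open>Ring homomorphisms\<close>

definition rhom :: "('a::comm_ring_1 \<Rightarrow> 'b::comm_ring_1) \<Rightarrow> bool" where
  "rhom \<phi> \<longleftrightarrow> \<phi> 1 = 1 \<and> (\<forall>x y. \<phi> (x + y) = \<phi> x + \<phi> y \<and> \<phi> (x * y) = \<phi> x * \<phi> y)"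

lemma rhom_add: "rhom \<phi> \<Longrightarrow> \<phi> (x + y) = \<phi> x + \<phi> y" unfolding rhom_def by blast
lemma rhom_mult: "rhom \<phi> \<Longrightarrow> \<phi> (x * y) = \<phi> x * \<phi> y" unfolding rhom_def by blast
lemma rhom_one: "rhom \<phi> \<Longrightarrow> \<phi> 1 = 1" unfolding rhom_def by blast
lemma rhom_zero: "rhom \<phi> \<Longrightarrow> \<phi> 0 = 0"
  using rhom_add[of \<phi> 0 0] by simp
lemma rhom_uminus: "rhom \<phi> \<Longrightarrow> \<phi> (- x) = - \<phi> x"
  using rhom_add[of \<phi> x "- x"] rhom_zero[of \<phi>] by (metis add.commute add_eq_0_iff)
lemma rhom_diff: "rhom \<phi> \<Longrightarrow> \<phi> (x - y) = \<phi> x - \<phi> y"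
  using rhom_add[of \<phi> x "- y"] rhom_uminus[of \<phi> y] by simp
lemma rhom_sum: "rhom \<phi> \<Longrightarrow> \<phi> (sum f I) = (\<Sum>i\<in>I. \<phi> (f i))"
  by (induction I rule: infinite_finite_induct) (auto simp: rhom_zero rhom_add)
lemma rhom_prod: "rhom \<phi> \<Longrightarrow> \<phi> (prod f I) = (\<Prod>i\<in>I. \<phi> (f i))"
  by (induction I rule: infinite_finite_induct) (auto simp: rhom_one rhom_mult)
lemma rhom_power: "rhom \<phi> \<Longrightarrow> \<phi> (x ^ n) = \<phi> x ^ n"
  by (induction n) (auto simp: rhom_one rhom_mult)
lemma rhom_comp: "rhom \<phi> \<Longrightarrow> rhom \<psi> \<Longrightarrow> rhom (\<psi> \<circ> \<phi>)"
  unfolding rhom_def by simp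

definition pullexp :: "('a \<Rightarrow> 'b) \<Rightarrow> 'a set \<Rightarrow> ('b \<Rightarrow> nat) \<Rightarrow> ('a \<Rightarrow> nat)" where
  "pullexp \<phi> X e' = restrict (e' \<circ> \<phi>) X"

lemma pullexp_bij:
  assumes "inj_on \<phi> X"
  shows "bij_betw (pullexp \<phi> X) (expo (\<phi> ` X) D) (expo X D)"
proof (rule bij_betw_imageI)
  show "inj_on (pullexp \<phi> X) (expo (\<phi> ` X) D)"
  proof (rule inj_onI)
    fix e1 e2 assume H: "e1 \<in> expo (\<phi> ` X) D" "e2 \<in> expo (\<phi> ` X) D" "pullexp \<phi> X e1 = pullexp \<phi> X e2"
    show "e1 = e2"
    proof
      fix y show "e1 y = e2 y"
      proof (cases "y \<in> \<phi> ` X")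
        case True
        then obtain x where "x \<in> X" "y = \<phi> x" by auto
        then show ?thesis using H(3) unfolding pullexp_def by (metis comp_apply restrict_apply')
      next
        case False then show ?thesis using H(1,2) unfolding expo_def by (auto simp: PiE_def extensional_def)
      qed
    qed
  qed
  show "pullexp \<phi> X ` expo (\<phi> ` X) D = expo X D"
  proof
    show "pullexp \<phi> X ` expo (\<phi> ` X) D \<subseteq> expo X D"
      unfolding pullexp_def expo_def by (auto simp: PiE_def Pi_def)
    show "expo X D \<subseteq> pullexp \<phi> X ` expo (\<phi> ` X) D"
    proof
      fix e assume e: "e \<in> expo X D"
      define e' where "e' = restrict (\<lambda>y. e (inv_into X \<phi> y)) (\<phi> ` X)"
      have "e' \<in> expo (\<phi> ` X) D" using e unfolding e'_def expo_def
        by (auto simp: PiE_def Pi_def inv_into_into)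
      moreover have "pullexp \<phi> X e' = e"
        using e assms unfolding pullexp_def e'_def expo_def
        by (auto simp: fun_eq_iff PiE_def extensional_def)
      ultimately show "e \<in> pullexp \<phi> X ` expo (\<phi> ` X) D" by (metis image_eqI)
    qed
  qed
qed

lemma mnm_pullexp:
  assumes "rhom \<phi>" "inj_on \<phi> X"
  shows "\<phi> (mnm X (pullexp \<phi> X e')) = mnm (\<phi> ` X) e'"
proof -
  have "\<phi> (mnm X (pullexp \<phi> X e')) = (\<Prod>x\<in>X. \<phi> x ^ e' (\<phi> x))"
    unfolding mnm_def pullexp_def by (simp add: rhom_prod[OF assms(1)] rhom_power[OF assms(1)])
  also have "\<dots> = mnm (\<phi> ` X) e'"
    unfolding mnm_def using prod.reindex[OF assms(2), of "\<lambda>y. y ^ e' y"] by simp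
  finally show ?thesis .
qed

lemma transport_sum:
  assumes "rhom \<phi>" "inj_on \<phi> X"
  shows "\<phi> (\<Sum>e\<in>expo X D. k e * mnm X e) = (\<Sum>e'\<in>expo (\<phi> ` X) D. \<phi> (k (pullexp \<phi> X e')) * mnm (\<phi> ` X) e')"
proof -
  have "\<phi> (\<Sum>e\<in>expo X D. k e * mnm X e) = (\<Sum>e\<in>expo X D. \<phi> (k e) * \<phi> (mnm X e))"
    by (simp add: rhom_sum[OF assms(1)] rhom_mult[OF assms(1)])
  also have "\<dots> = (\<Sum>e'\<in>expo (\<phi> ` X) D. \<phi> (k (pullexp \<phi> X e')) * \<phi> (mnm X (pullexp \<phi> X e')))"
    by (rule sum.reindex_bij_betw[OF pullexp_bij[OF assms(2)], symmetric])
  also have "\<dots> = (\<Sum>e'\<in>expo (\<phi> ` X) D. \<phi> (k (pullexp \<phi> X e')) * mnm (\<phi> ` X) e')"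
    by (simp add: mnm_pullexp[OF assms])
  finally show ?thesis .
qed

lemma transport_back:
  assumes hom: "rhom \<phi>" and inj: "inj_on \<phi> X" and ind: "indepM B (\<phi> ` X)"
    and kA: "\<forall>e\<in>expo X D. k e \<in> A" and AB: "\<phi> ` A \<subseteq> B"
    and nz: "\<forall>a\<in>A. \<phi> a = 0 \<longrightarrow> a = 0"
    and s0: "\<phi> (\<Sum>e\<in>expo X D. k e * mnm X e) = 0"
  shows "\<forall>e\<in>expo X D. k e = 0"
proof
  fix e assume e: "e \<in> expo X D"
  have s: "(\<Sum>e'\<in>expo (\<phi> ` X) D. \<phi> (k (pullexp \<phi> X e')) * mnm (\<phi> ` X) e') = 0"
    using s0 transport_sum[OF hom inj] by simp
  have inB: "\<forall>e'\<in>expo (\<phi> ` X) D. \<phi> (k (pullexp \<phi> X e')) \<in> B"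
    proof
    fix e' assume "e' \<in> expo (\<phi> ` X) D"
    then have "pullexp \<phi> X e' \<in> expo X D" using pullexp_bij[OF inj, of D] by (auto simp: bij_betw_def)
    then show "\<phi> (k (pullexp \<phi> X e')) \<in> B" using kA AB by blast
  qed
  have z: "\<forall>e'\<in>expo (\<phi> ` X) D. \<phi> (k (pullexp \<phi> X e')) = 0"
    using indepMD[OF ind inB s] by blast
  obtain e' where "e' \<in> expo (\<phi> ` X) D" "e = pullexp \<phi> X e'"
    using pullexp_bij[OF inj, of D] e by (auto simp: bij_betw_def)
  then show "k e = 0" using z kA nz e by auto
qed

lemma transport_fwd:
  assumes hom: "rhom \<phi>" and injg: "inj \<phi>" and ind: "indepM A X" and BA: "B \<subseteq> \<phi> ` A"
  shows "indepM B (\<phi> ` X)"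
  unfolding indepM_def
proof (intro conjI allI impI)
  have fin: "finite X" using ind unfolding indepM_def by simp
  then show "finite (\<phi> ` X)" by simp
  have inj: "inj_on \<phi> X" using injg by (meson inj_on_subset subset_UNIV)
  fix D k' assume H: "(\<forall>e\<in>expo (\<phi> ` X) D. k' e \<in> B) \<and> (\<Sum>e\<in>expo (\<phi> ` X) D. k' e * mnm (\<phi> ` X) e) = 0"
  let ?E' = "expo (\<phi> ` X) D" and ?E = "expo X D"
  define \<kappa> where "\<kappa> e' = inv_into A \<phi> (k' e')" for e'
  have \<kappa>: "\<forall>e'\<in>?E'. \<kappa> e' \<in> A \<and> \<phi> (\<kappa> e') = k' e'"
  proof
    fix e' assume "e' \<in> ?E'"
    then have "k' e' \<in> \<phi> ` A" using H BA by blast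
    then show "\<kappa> e' \<in> A \<and> \<phi> (\<kappa> e') = k' e'" unfolding \<kappa>_def by (simp add: inv_into_into f_inv_into_f)
  qed
  have bij: "bij_betw (pullexp \<phi> X) ?E' ?E" by (rule pullexp_bij[OF inj])
  define k where "k e = \<kappa> (inv_into ?E' (pullexp \<phi> X) e)" for e
  have kk: "k (pullexp \<phi> X e') = \<kappa> e'" if "e' \<in> ?E'" for e'
    unfolding k_def using bij that by (simp add: bij_betw_def inv_into_f_f)
  have "\<phi> (\<Sum>e\<in>?E. k e * mnm X e) = (\<Sum>e'\<in>?E'. \<phi> (k (pullexp \<phi> X e')) * mnm (\<phi> ` X) e')"
    by (rule transport_sum[OF hom inj])
  also have "\<dots> = (\<Sum>e'\<in>?E'. k' e' * mnm (\<phi> ` X) e')"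
    using kk \<kappa> by (intro sum.cong) auto
  finally have "\<phi> (\<Sum>e\<in>?E. k e * mnm X e) = \<phi> 0" using H rhom_zero[OF hom] by simp
  then have s0: "(\<Sum>e\<in>?E. k e * mnm X e) = 0" using injg by (simp add: inj_eq)
  have kA: "\<forall>e\<in>?E. k e \<in> A"
    unfolding k_def using \<kappa> bij by (auto simp: bij_betw_def inv_into_into)
  have k0: "\<forall>e\<in>?E. k e = 0" using indepMD[OF ind kA s0] by blast
  show "\<forall>e'\<in>?E'. k' e' = 0"
  proof
    fix e' assume "e' \<in> ?E'"
    then have "pullexp \<phi> X e' \<in> ?E" using bij by (auto simp: bij_betw_def)
    then have "\<kappa> e' = 0" using k0 kk \<open>e' \<in> ?E'\<close> by auto
    then show "k' e' = 0" using \<kappa> \<open>e' \<in> ?E'\<close> rhom_zero[OF hom] by force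
  qed
qed

lemma alg_data:
  fixes X :: "'a::comm_ring_1 set"
  assumes C: "is_subring C" and fin: "finite X" and gX: "g \<notin> X" and ind: "indepM C X"
    and nind: "\<not> indepM C (insert g X)"
  shows "\<exists>n \<delta> a. n \<ge> 1 \<and> (\<forall>j\<le>n. a j \<in> spn C (Mon X \<delta>)) \<and> a n \<noteq> 0 \<and> (\<Sum>j\<le>n. a j * g ^ j) = 0"
proof -
  obtain D k where kC: "\<forall>e\<in>expo (insert g X) D. k e \<in> C"
    and s0: "(\<Sum>e\<in>expo (insert g X) D. k e * mnm (insert g X) e) = 0"
    and nz: "\<exists>e\<in>expo (insert g X) D. k e \<noteq> 0"
    using nind fin unfolding indepM_def by auto
  define A where "A j = (\<Sum>e\<in>expo X D. k (e(g := j)) * mnm X e)" for j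
  have AC: "A j \<in> spn C (Mon X D)" if "j \<le> D" for j
    unfolding A_def
  proof (rule spn_sum)
    fix e assume "e \<in> expo X D"
    then show "k (e(g := j)) * mnm X e \<in> spn C (Mon X D)"
    proof (intro spn.spn_base)
      show "k (e(g := j)) \<in> C" using kC expo_upd[OF \<open>e \<in> expo X D\<close> that, of g] by blast
      show "mnm X e \<in> Mon X D" using \<open>e \<in> expo X D\<close> by (simp add: Mon_def)
    qed
  qed
  have sA: "(\<Sum>j\<le>D. g ^ j * A j) = 0" using s0 unfolding slice_sum[OF gX fin] A_def .
  have ex: "\<exists>j\<le>D. A j \<noteq> 0"
  proof (rule ccontr)
    assume "\<not> ?thesis"
    then have A0: "\<forall>j\<le>D. A j = 0" by auto
    obtain e where e: "e \<in> expo (insert g X) D" "k e \<noteq> 0" using nz by blast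
    obtain j e' where j: "j \<le> D" "e' \<in> expo X D" "e = e'(g := j)" using e(1) by (rule expo_insert_cases)
    have "\<forall>e\<in>expo X D. k (e(g := j)) \<in> C"
    proof
      fix e assume "e \<in> expo X D"
      then show "k (e(g := j)) \<in> C" using kC expo_upd[OF \<open>e \<in> expo X D\<close> j(1), of g] by blast
    qed
    moreover have "(\<Sum>e\<in>expo X D. k (e(g := j)) * mnm X e) = 0" using A0 j(1) unfolding A_def by blast
    ultimately have "k (e'(g := j)) = 0" using indepMD[OF ind _ _ j(2), of "\<lambda>e. k (e(g:=j))"] by simp
    then show False using e j by simp
  qed
  define n where "n = Max {j. j \<le> D \<and> A j \<noteq> 0}"
  have finJ: "finite {j. j \<le> D \<and> A j \<noteq> 0}" by simp
  have n: "n \<le> D" "A n \<noteq> 0" using Max_in[OF finJ] ex unfolding n_def by auto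
  have nmax: "A j = 0" if "n < j" "j \<le> D" for j
  proof (rule ccontr)
    assume "A j \<noteq> 0"
    then have "j \<le> n" using Max_ge[OF finJ, of j] that unfolding n_def by blast
    then show False using that by simp
  qed
  have "(\<Sum>j\<le>n. A j * g ^ j) = (\<Sum>j\<le>D. A j * g ^ j)"
  proof (rule sum.mono_neutral_left)
    show "finite {..D}" by simp
    show "{..n} \<subseteq> {..D}" using n by auto
    show "\<forall>i\<in>{..D} - {..n}. A i * g ^ i = 0" using nmax by auto
  qed
  also have "\<dots> = 0" using sA by (simp add: mult.commute)
  finally have s: "(\<Sum>j\<le>n. A j * g ^ j) = 0" .
  have "n \<ge> 1"
  proof (rule ccontr)
    assume "\<not> n \<ge> 1" then have "n = 0" by simp
    then show False using s n by simp
  qed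
  then show ?thesis using s n AC by (intro exI[of _ n] exI[of _ D] exI[of _ A]) auto
qed

lemma indep_insert_kernel:
  fixes \<phi> :: "'a::idom \<Rightarrow> 'b::comm_ring_1"
  assumes hom: "rhom \<phi>" and fin: "finite X" and inj: "inj_on \<phi> X" and ind: "indepM B (\<phi> ` X)"
    and KB: "\<phi> ` K \<subseteq> B" and nzK: "\<forall>a\<in>K. \<phi> a = 0 \<longrightarrow> a = 0"
    and pX: "p \<notin> X" and p0: "p \<noteq> 0" and \<phi>p: "\<phi> p = 0"
  shows "indepM K (insert p X)"
  unfolding indepM_def
proof (intro conjI allI impI)
  show "finite (insert p X)" using fin by simp
  fix D k assume H: "(\<forall>e\<in>expo (insert p X) D. k e \<in> K) \<and> (\<Sum>e\<in>expo (insert p X) D. k e * mnm (insert p X) e) = 0"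
  define A where "A j = (\<Sum>e\<in>expo X D. k (e(p := j)) * mnm X e)" for j
  have sA: "(\<Sum>j\<le>D. p ^ j * A j) = 0" using H unfolding slice_sum[OF pX fin] A_def by simp
  have kK: "\<forall>e\<in>expo X D. k (e(p := j)) \<in> K" if "j \<le> D" for j
  proof
    fix e assume "e \<in> expo X D"
    then show "k (e(p := j)) \<in> K" using H expo_upd[OF \<open>e \<in> expo X D\<close> that, of p] by blast
  qed
  have claim: "\<forall>e\<in>expo X D. k (e(p := j)) = 0" if "j \<le> D" for j
    using that
  proof (induction j rule: less_induct)
    case (less j)
    have Ai: "A i = 0" if "i < j" for i
    proof -
      have "i \<le> D" using that less.prems by simp
      have h: "\<forall>e\<in>expo X D. k (e(p := i)) = 0" by (rule less.IH[OF that \<open>i \<le> D\<close>])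
      show ?thesis unfolding A_def by (metis (no_types, lifting) h mult_zero_left sum.neutral)
    qed
    have split: "{..D} = {..<j} \<union> {j..D}" using less.prems by auto
    have "(\<Sum>j\<le>D. p ^ j * A j) = (\<Sum>i<j. p ^ i * A i) + (\<Sum>i\<in>{j..D}. p ^ i * A i)"
      unfolding split by (rule sum.union_disjoint) auto
    then have "(\<Sum>i\<in>{j..D}. p ^ i * A i) = 0" using sA Ai by simp
    moreover have "(\<Sum>i\<in>{j..D}. p ^ i * A i) = p ^ j * (\<Sum>i\<in>{j..D}. p ^ (i - j) * A i)"
    proof -
      have hh: "p ^ i * A i = p ^ j * (p ^ (i - j) * A i)" if "i \<in> {j..D}" for i
      proof -
        have "p ^ i = p ^ j * p ^ (i - j)" using that by (simp flip: power_add)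
        then show ?thesis by simp
      qed
      show ?thesis unfolding sum_distrib_left by (intro sum.cong refl) (rule hh)
    qed
    ultimately have s2: "(\<Sum>i\<in>{j..D}. p ^ (i - j) * A i) = 0" using p0 by simp
    have "\<phi> (\<Sum>i\<in>{j..D}. p ^ (i - j) * A i) = (\<Sum>i\<in>{j..D}. (0::'b) ^ (i - j) * \<phi> (A i))"
      by (simp add: rhom_sum[OF hom] rhom_mult[OF hom] rhom_power[OF hom] \<phi>p)
    also have "\<dots> = (\<Sum>i\<in>{j}. (0::'b) ^ (i - j) * \<phi> (A i))"
    proof (rule sum.mono_neutral_right)
      show "finite {j..D}" by simp
      show "{j} \<subseteq> {j..D}" using less.prems by simp
      show "\<forall>i\<in>{j..D} - {j}. (0::'b) ^ (i - j) * \<phi> (A i) = 0" by (auto simp: power_0_left)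
    qed
    also have "\<dots> = \<phi> (A j)" by simp
    finally have "\<phi> (A j) = 0" using s2 rhom_zero[OF hom] by simp
    then have "\<phi> (\<Sum>e\<in>expo X D. k (e(p := j)) * mnm X e) = 0" unfolding A_def .
    then show ?case by (rule transport_back[OF hom inj ind kK[OF less.prems] KB nzK])
  qed
  show "\<forall>e\<in>expo (insert p X) D. k e = 0"
  proof
    fix e assume "e \<in> expo (insert p X) D"
    then obtain j e' where j: "j \<le> D" "e' \<in> expo X D" "e = e'(p := j)" by (rule expo_insert_cases)
    then show "k e = 0" using claim by blast
  qed
qed

section \<open>Polynomial ring generated by a finite set\<close>

primrec Mk :: "'a::comm_ring_1 set \<Rightarrow> nat \<Rightarrow> 'a set" where
  "Mk Y 0 = {1}"
| "Mk Y (Suc k) = setmul Y (Mk Y k)"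

definition Mle :: "'a::comm_ring_1 set \<Rightarrow> nat \<Rightarrow> 'a set" where
  "Mle Y t = (\<Union>k\<le>t. Mk Y k)"

definition Pt :: "'a::comm_ring_1 set \<Rightarrow> 'a set \<Rightarrow> nat \<Rightarrow> 'a set" where
  "Pt C Y t = spn C (Mle Y t)"

definition FR :: "'a::comm_ring_1 set \<Rightarrow> 'a set \<Rightarrow> 'a set" where
  "FR C Y = (\<Union>t. Pt C Y t)"

definition fracs :: "'f::field set \<Rightarrow> 'f set \<Rightarrow> 'f set" where
  "fracs C Y = {p / q | p q. p \<in> FR C Y \<and> q \<in> FR C Y \<and> q \<noteq> 0}"

lemma Mk_mult: "m \<in> Mk Y i \<Longrightarrow> m' \<in> Mk Y j \<Longrightarrow> m * m' \<in> Mk Y (i + j)"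
proof (induction i arbitrary: m)
  case 0 then show ?case by simp
next
  case (Suc i)
  then obtain y m0 where "y \<in> Y" "m0 \<in> Mk Y i" "m = y * m0" by (auto simp: setmul_def)
  then have "m0 * m' \<in> Mk Y (i + j)" using Suc by blast
  then show ?case using \<open>y \<in> Y\<close> \<open>m = y * m0\<close> by (auto simp: setmul_def mult.assoc)
qed

lemma Mle_mult: "m \<in> Mle Y i \<Longrightarrow> m' \<in> Mle Y j \<Longrightarrow> m * m' \<in> Mle Y (i + j)"
  unfolding Mle_def using Mk_mult by fastforce

lemma Mle_mono: "t \<le> t' \<Longrightarrow> Mle Y t \<subseteq> Mle Y t'"
  unfolding Mle_def by (intro UN_mono) auto

lemma Pt_mono: "t \<le> t' \<Longrightarrow> x \<in> Pt C Y t \<Longrightarrow> x \<in> Pt C Y t'"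
  unfolding Pt_def using spn_mono[OF Mle_mono] by blast

lemma Pt_mult:
  assumes C: "is_subring C" and "x \<in> Pt C Y i" "y \<in> Pt C Y j"
  shows "x * y \<in> Pt C Y (i + j)"
proof -
  have "x * y \<in> spn C (setmul (Mle Y i) (Mle Y j))" using spn_mult[OF C] assms unfolding Pt_def by blast
  moreover have "setmul (Mle Y i) (Mle Y j) \<subseteq> Mle Y (i + j)" unfolding setmul_def using Mle_mult by blast
  ultimately show ?thesis unfolding Pt_def using spn_mono by blast
qed

lemma Pt_one: "is_subring C \<Longrightarrow> 1 \<in> Pt C Y 0"
  unfolding Pt_def Mle_def by (rule spn_baseI) auto

lemma Pt_const: "is_subring C \<Longrightarrow> c \<in> C \<Longrightarrow> c \<in> Pt C Y 0"
  unfolding Pt_def Mle_def using spn.spn_base[of c C 1] by auto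

lemma Pt_var: "is_subring C \<Longrightarrow> y \<in> Y \<Longrightarrow> y \<in> Pt C Y 1"
proof -
  assume C: "is_subring C" "y \<in> Y"
  have "y * 1 \<in> Mk Y 1" using C by (auto simp: setmul_def)
  then have "y \<in> Mle Y 1" unfolding Mle_def by (metis UN_iff atMost_iff le_refl mult_1_right)
  then show ?thesis unfolding Pt_def by (rule spn_baseI[OF C(1)])
qed

lemma Pt_power: "is_subring C \<Longrightarrow> x \<in> Pt C Y d \<Longrightarrow> x ^ m \<in> Pt C Y (d * m)"
proof (induction m)
  case 0 then show ?case using Pt_one by simp
next
  case (Suc m)
  have "x * x ^ m \<in> Pt C Y (d + d * m)"
    by (rule Pt_mult[OF Suc.prems(1) Suc.prems(2) Suc.IH[OF Suc.prems]])
  then show ?case by simp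
qed

lemma Pt_prod_power:
  assumes C: "is_subring C" and fin: "finite Z" and p: "\<forall>z\<in>Z. p z \<in> Pt C Y d"
  shows "(\<Prod>z\<in>Z. p z ^ e z) \<in> Pt C Y (d * (\<Sum>z\<in>Z. e z))"
  using fin p
proof (induction Z rule: finite_induct)
  case empty then show ?case using Pt_one[OF C] by simp
next
  case (insert z Z)
  have pz: "p z \<in> Pt C Y d" using insert.prems by simp
  have "p z ^ e z * (\<Prod>z\<in>Z. p z ^ e z) \<in> Pt C Y (d * e z + d * (\<Sum>z\<in>Z. e z))"
    by (rule Pt_mult[OF C Pt_power[OF C pz] insert.IH]) (use insert.prems in simp)
  then show ?case using insert by (simp add: distrib_left)
qed

lemma FR_mult: "is_subring C \<Longrightarrow> x \<in> FR C Y \<Longrightarrow> y \<in> FR C Y \<Longrightarrow> x * y \<in> FR C Y"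
proof -
  assume C: "is_subring C" "x \<in> FR C Y" "y \<in> FR C Y"
  then obtain i j where "x \<in> Pt C Y i" "y \<in> Pt C Y j" unfolding FR_def by auto
  then have "x * y \<in> Pt C Y (i + j)" by (rule Pt_mult[OF C(1)])
  then show ?thesis unfolding FR_def by blast
qed

lemma FR_add: "is_subring C \<Longrightarrow> x \<in> FR C Y \<Longrightarrow> y \<in> FR C Y \<Longrightarrow> x + y \<in> FR C Y"
proof -
  assume C: "is_subring C" "x \<in> FR C Y" "y \<in> FR C Y"
  then obtain i j where "x \<in> Pt C Y i" "y \<in> Pt C Y j" unfolding FR_def by auto
  then have "x \<in> Pt C Y (i + j)" "y \<in> Pt C Y (i + j)" using Pt_mono by (metis le_add1 le_add2)+
  then show ?thesis unfolding FR_def Pt_def by (blast intro: spn.spn_add)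
qed

lemma FR_uminus: "is_subring C \<Longrightarrow> x \<in> FR C Y \<Longrightarrow> - x \<in> FR C Y"
  unfolding FR_def Pt_def using spn_uminus by blast

lemma FR_const: "is_subring C \<Longrightarrow> c \<in> C \<Longrightarrow> c \<in> FR C Y"
  unfolding FR_def using Pt_const by blast

lemma FR_var: "is_subring C \<Longrightarrow> y \<in> Y \<Longrightarrow> y \<in> FR C Y"
  unfolding FR_def using Pt_var by blast

lemma FR_subring: assumes C: "is_subring C" shows "is_subring (FR C Y)"
  unfolding is_subring_def[of "FR C Y"]
proof (intro conjI ballI)
  show "0 \<in> FR C Y" using FR_const[OF C subringD(1)[OF C]] .
  show "1 \<in> FR C Y" unfolding FR_def using Pt_one[OF C] by blast
  fix x y assume "x \<in> FR C Y" "y \<in> FR C Y"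
  then show "x + y \<in> FR C Y" "x * y \<in> FR C Y" "- x \<in> FR C Y"
    using FR_add[OF C] FR_mult[OF C] FR_uminus[OF C] by auto
qed

lemma common_denom:
  fixes C :: "'f::field set"
  assumes C: "is_subring C" and fin: "finite Z"
  shows "Z \<subseteq> fracs C Y \<Longrightarrow> \<exists>d q p. q \<in> Pt C Y d \<and> q \<noteq> 0 \<and> (\<forall>z\<in>Z. p z \<in> Pt C Y d \<and> z = p z / q)"
  using fin
proof (induction Z rule: finite_induct)
  case empty then show ?case using Pt_one[OF C] by (intro exI[of _ 0] exI[of _ 1]) auto
next
  case (insert z Z)
  then obtain d q p where dqp: "q \<in> Pt C Y d" "q \<noteq> 0" "\<forall>w\<in>Z. p w \<in> Pt C Y d \<and> w = p w / q" by auto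
  obtain p0 q0 where pq0: "p0 \<in> FR C Y" "q0 \<in> FR C Y" "q0 \<noteq> 0" "z = p0 / q0"
    using insert.prems unfolding fracs_def by auto
  obtain t1 t2 where "p0 \<in> Pt C Y t1" "q0 \<in> Pt C Y t2" using pq0 unfolding FR_def by auto
  then have t: "p0 \<in> Pt C Y (t1 + t2)" "q0 \<in> Pt C Y (t1 + t2)" using Pt_mono by (metis le_add1 le_add2)+
  define p' where "p' w = (if w = z then p0 * q else p w * q0)" for w
  have "q * q0 \<in> Pt C Y (d + (t1 + t2))" using Pt_mult[OF C dqp(1) t(2)] .
  moreover have "q * q0 \<noteq> 0" using dqp pq0 by simp
  moreover have "\<forall>w\<in>insert z Z. p' w \<in> Pt C Y (d + (t1 + t2)) \<and> w = p' w / (q * q0)"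
  proof
    fix w assume w: "w \<in> insert z Z"
    show "p' w \<in> Pt C Y (d + (t1 + t2)) \<and> w = p' w / (q * q0)"
    proof (cases "w = z")
      case True
      then show ?thesis unfolding p'_def using Pt_mult[OF C t(1) dqp(1)] pq0 dqp(2)
        by (simp add: add.commute)
    next
      case False
      then have "w \<in> Z" using w by simp
      then show ?thesis unfolding p'_def using Pt_mult[OF C _ t(2)] dqp pq0(3) False by auto
    qed
  qed
  ultimately show ?case by blast
qed

locale keyd =
  fixes F :: "'f::field set" and X G :: "'f set" and n :: "'f \<Rightarrow> nat"
    and a :: "'f \<Rightarrow> nat \<Rightarrow> 'f" and \<delta> :: nat
  assumes Fs: "is_subfield F" and finX: "finite X" and finG: "finite G"
    and n1: "\<And>g. g \<in> G \<Longrightarrow> n g \<ge> 1"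
    and aP: "\<And>g j. g \<in> G \<Longrightarrow> j \<le> n g \<Longrightarrow> a g j \<in> spn F (Mon X \<delta>)"
    and an: "\<And>g. g \<in> G \<Longrightarrow> a g (n g) \<noteq> 0"
    and rel: "\<And>g. g \<in> G \<Longrightarrow> (\<Sum>j\<le>n g. a g j * g ^ j) = 0"
begin

lemma C: "is_subring F" using Fs by (rule subfield_subring)

definition ell where "ell = (\<Prod>g\<in>G. a g (n g))"
definition RedG where "RedG = (\<lambda>f. \<Prod>g\<in>G. g ^ f g) ` PiE G (\<lambda>g. {..<n g})"
definition W where "W b = spn F (setmul (Mon X b) RedG)"
definition mu where "mu = card G * \<delta> + \<delta> + 1"

lemma ell_nz: "ell \<noteq> 0" unfolding ell_def using an finG by simp

lemma prod_a_P: assumes "G' \<subseteq> G" shows "(\<Prod>g\<in>G'. a g (n g)) \<in> spn F (Mon X (card G' * \<delta>))"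
proof -
  have "finite G'" using finG assms by (rule finite_subset[rotated])
  then show ?thesis using assms
  proof (induction G' rule: finite_induct)
    case empty then show ?case using spn_baseI[OF C one_Mon] by simp
  next
    case (insert g G')
    have "a g (n g) * (\<Prod>g\<in>G'. a g (n g)) \<in> spn F (Mon X (\<delta> + card G' * \<delta>))"
      by (rule spn_Mon_mult[OF C aP insert.IH]) (use insert.prems in auto)
    then show ?case using insert by simp
  qed
qed

lemma ell_P: "ell \<in> spn F (Mon X (card G * \<delta>))"
  unfolding ell_def by (rule prod_a_P) simp

lemma W_mono: "b \<le> b' \<Longrightarrow> u \<in> W b \<Longrightarrow> u \<in> W b'"
proof -
  assume "b \<le> b'" "u \<in> W b"
  moreover have "setmul (Mon X b) RedG \<subseteq> setmul (Mon X b') RedG"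
    using Mon_mono[OF \<open>b \<le> b'\<close>] unfolding setmul_def by blast
  ultimately show ?thesis unfolding W_def using spn_mono by blast
qed

lemma WP: "x \<in> spn F (Mon X c) \<Longrightarrow> u \<in> W b \<Longrightarrow> x * u \<in> W (c + b)"
proof -
  assume H: "x \<in> spn F (Mon X c)" "u \<in> W b"
  have "x * u \<in> spn F (setmul (Mon X c) (setmul (Mon X b) RedG))"
    using spn_mult[OF C H(1)] H(2) unfolding W_def by blast
  moreover have "setmul (Mon X c) (setmul (Mon X b) RedG) \<subseteq> setmul (Mon X (c + b)) RedG"
  proof
    fix v assume "v \<in> setmul (Mon X c) (setmul (Mon X b) RedG)"
    then obtain m1 m2 r where "m1 \<in> Mon X c" "m2 \<in> Mon X b" "r \<in> RedG" "v = m1 * (m2 * r)"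
      unfolding setmul_def by blast
    moreover have "m1 * m2 \<in> Mon X (c + b)" using \<open>m1 \<in> Mon X c\<close> \<open>m2 \<in> Mon X b\<close> by (rule Mon_mult)
    ultimately show "v \<in> setmul (Mon X (c + b)) RedG" unfolding setmul_def
      by (metis (mono_tags, lifting) mem_Collect_eq mult.assoc)
  qed
  ultimately show ?thesis unfolding W_def by (rule spn_mono[rotated])
qed

lemma RedG_W: "m \<in> Mon X b \<Longrightarrow> r \<in> RedG \<Longrightarrow> m * r \<in> W b"
  unfolding W_def setmul_def by (rule spn_baseI[OF C]) blast

lemma one_RedG: "1 \<in> RedG"
proof -
  have "\<forall>g\<in>G. (0::nat) \<in> {..<n g}" using n1 by (simp add: Suc_le_eq)
  then have P: "restrict (\<lambda>_. 0) G \<in> PiE G (\<lambda>g. {..<n g})" by (simp add: restrict_PiE_iff)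
  have E: "1 = (\<Prod>g\<in>G. g ^ restrict (\<lambda>_. 0::nat) G g)" by (intro prod.neutral[symmetric]) simp
  show ?thesis unfolding RedG_def by (rule image_eqI[where f="\<lambda>f. \<Prod>g\<in>G. g ^ f g", OF E P])
qed

lemma one_W: "1 \<in> W 0" using RedG_W[OF one_Mon one_RedG] by simp

lemma ell_W: "u \<in> W b \<Longrightarrow> ell * u \<in> W (b + mu)"
proof -
  assume "u \<in> W b"
  then have "ell * u \<in> W (card G * \<delta> + b)" by (rule WP[OF ell_P])
  then show ?thesis by (rule W_mono[rotated]) (simp add: mu_def)
qed

lemma ell_pow_W: "u \<in> W b \<Longrightarrow> ell ^ i * u \<in> W (b + i * mu)"
proof (induction i)
  case 0 then show ?case by simp
next
  case (Suc i)
  have "ell * (ell ^ i * u) \<in> W (b + i * mu + mu)" by (rule ell_W[OF Suc.IH[OF Suc.prems]])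
  then show ?case by (simp add: algebra_simps)
qed

lemma core_g:
  assumes g: "g \<in> G" and m: "m \<in> Mon X b" and r: "r \<in> RedG"
  shows "ell * (m * (g * r)) \<in> W (b + mu)"
proof -
  obtain f where f: "f \<in> PiE G (\<lambda>g. {..<n g})" "r = (\<Prod>g\<in>G. g ^ f g)" using r unfolding RedG_def by auto
  define r' where "r' = (\<Prod>g'\<in>G - {g}. g' ^ f g')"
  have rsplit: "(\<Prod>g'\<in>G. g' ^ h g') = g ^ h g * (\<Prod>g'\<in>G - {g}. g' ^ h g')" for h
    using g finG by (simp add: prod.remove)
  have r'eq: "(\<Prod>g'\<in>G - {g}. g' ^ (f(g := j)) g') = r'" for j
    unfolding r'_def by (intro prod.cong) auto
  have upd_Red: "g ^ j * r' \<in> RedG" if "j < n g" for j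
  proof -
    have P: "f(g := j) \<in> PiE G (\<lambda>g. {..<n g})" using f(1) that g by (auto simp: PiE_def Pi_def extensional_def)
    have E: "g ^ j * r' = (\<Prod>g'\<in>G. g' ^ (f(g := j)) g')" using rsplit[of "f(g := j)"] r'eq by simp
    show ?thesis unfolding RedG_def by (rule image_eqI[where f="\<lambda>f. \<Prod>g\<in>G. g ^ f g", OF E P])
  qed
  have fg: "f g < n g" using f(1) g by auto
  have gr: "g * r = g ^ (f g + 1) * r'" using rsplit[of f] f(2) unfolding r'_def by simp
  show ?thesis
  proof (cases "f g + 1 < n g")
    case True
    have "m * (g ^ (f g + 1) * r') \<in> W b" by (rule RedG_W[OF m upd_Red[OF True]])
    then have "m * (g * r) \<in> W b" by (simp only: gr)
    then show ?thesis by (rule ell_W)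
  next
    case False
    then have nf: "n g = f g + 1" using fg by simp
    define ell' where "ell' = (\<Prod>g'\<in>G - {g}. a g' (n g'))"
    have ell_split: "ell = a g (n g) * ell'" unfolding ell_def ell'_def using g finG by (simp add: prod.remove)
    have ell'P: "ell' \<in> spn F (Mon X (card G * \<delta>))"
    proof -
      have "ell' \<in> spn F (Mon X (card (G - {g}) * \<delta>))" unfolding ell'_def by (rule prod_a_P) auto
      moreover have "card (G - {g}) * \<delta> \<le> card G * \<delta>" using finG by (simp add: card_mono)
      ultimately show ?thesis using spn_mono[OF Mon_mono] by blast
    qed
    have relg: "a g (n g) * g ^ n g = - (\<Sum>j<n g. a g j * g ^ j)"
    proof -
      have "(\<Sum>j\<le>n g. a g j * g ^ j) = (\<Sum>j<n g. a g j * g ^ j) + a g (n g) * g ^ n g"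
        by (simp add: lessThan_Suc_atMost[symmetric])
      then show ?thesis using rel[OF g] by (simp add: eq_neg_iff_add_eq_0 add.commute)
    qed
    have "ell * (m * (g * r)) = ell' * m * r' * (a g (n g) * g ^ n g)"
      unfolding ell_split gr nf by (simp add: ac_simps)
    also have "\<dots> = - (\<Sum>j<n g. ell' * (a g j * (m * (g ^ j * r'))))"
      unfolding relg by (simp add: sum_distrib_left ac_simps)
    finally have eq: "ell * (m * (g * r)) = - (\<Sum>j<n g. ell' * (a g j * (m * (g ^ j * r'))))" .
    have "(\<Sum>j<n g. ell' * (a g j * (m * (g ^ j * r')))) \<in> W (card G * \<delta> + (\<delta> + b))"
      unfolding W_def
    proof (rule spn_sum)
      fix j assume "j \<in> {..<n g}"
      then have j: "j < n g" by simp
      have "m * (g ^ j * r') \<in> W b" by (rule RedG_W[OF m upd_Red[OF j]])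
      then have "a g j * (m * (g ^ j * r')) \<in> W (\<delta> + b)" by (rule WP[OF aP[OF g less_imp_le[OF j]]])
      then have "ell' * (a g j * (m * (g ^ j * r'))) \<in> W (card G * \<delta> + (\<delta> + b))" by (rule WP[OF ell'P])
      then show "ell' * (a g j * (m * (g ^ j * r'))) \<in> spn F (setmul (Mon X (card G * \<delta> + (\<delta> + b))) RedG)"
        unfolding W_def .
    qed
    then have "ell * (m * (g * r)) \<in> W (card G * \<delta> + (\<delta> + b))"
      unfolding eq W_def by (rule spn_uminus[OF C])
    then show ?thesis by (rule W_mono[rotated]) (simp add: mu_def)
  qed
qed

lemma ell_g_W:
  assumes g: "g \<in> G" and u: "u \<in> W b"
  shows "ell * (g * u) \<in> W (b + mu)"
  using u unfolding W_def[of b]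
proof induction
  case spn_zero then show ?case unfolding W_def by (simp add: spn.spn_zero)
next
  case (spn_base c v)
  then obtain m r where mr: "m \<in> Mon X b" "r \<in> RedG" "v = m * r" unfolding setmul_def by blast
  have "ell * (m * (g * r)) \<in> W (b + mu)" by (rule core_g[OF g mr(1,2)])
  then have "c * (ell * (m * (g * r))) \<in> W (b + mu)" unfolding W_def by (rule spn_smult[OF C spn_base(1)])
  then show ?case using mr by (simp add: ac_simps)
next
  case (spn_add x y)
  then show ?case unfolding W_def by (simp add: distrib_left spn.spn_add)
qed

lemma ell_x_W:
  assumes x: "x \<in> X" and u: "u \<in> W b"
  shows "ell * (x * u) \<in> W (b + mu)"
proof -
  have "x * u \<in> W (1 + b)" using WP[OF spn_baseI[OF C var_Mon[OF finX x]] u] .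
  then have "ell * (x * u) \<in> W (card G * \<delta> + (1 + b))" by (rule WP[OF ell_P])
  then show ?thesis by (rule W_mono[rotated]) (simp add: mu_def)
qed

lemma ell_y_W: "y \<in> X \<union> G \<Longrightarrow> u \<in> W b \<Longrightarrow> ell * (y * u) \<in> W (b + mu)"
  using ell_x_W ell_g_W by blast

lemma Mk_W: "m \<in> Mk (X \<union> G) k \<Longrightarrow> ell ^ k * m \<in> W (k * mu)"
proof (induction k arbitrary: m)
  case 0 then show ?case using one_W by simp
next
  case (Suc k)
  then obtain y m0 where y: "y \<in> X \<union> G" "m0 \<in> Mk (X \<union> G) k" "m = y * m0" by (auto simp: setmul_def)
  have "ell * (y * (ell ^ k * m0)) \<in> W (k * mu + mu)" by (rule ell_y_W[OF y(1) Suc.IH[OF y(2)]])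
  then show ?case using y(3) by (simp add: ac_simps)
qed

lemma Pt_W: "x \<in> Pt F (X \<union> G) t \<Longrightarrow> ell ^ t * x \<in> W (t * mu)"
  unfolding Pt_def
proof (induction rule: spn.induct)
  case spn_zero then show ?case unfolding W_def by (simp add: spn.spn_zero)
next
  case (spn_base c m)
  then obtain k where k: "k \<le> t" "m \<in> Mk (X \<union> G) k" unfolding Mle_def by auto
  have "ell ^ (t - k) * (ell ^ k * m) \<in> W (k * mu + (t - k) * mu)" by (rule ell_pow_W[OF Mk_W[OF k(2)]])
  moreover have "k * mu + (t - k) * mu = t * mu" using k(1) by (simp add: add_mult_distrib[symmetric])
  moreover have "ell ^ (t - k) * (ell ^ k * m) = ell ^ t * m" using k(1) by (simp add: mult.assoc[symmetric] power_add[symmetric])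
  ultimately have "ell ^ t * m \<in> W (t * mu)" by simp
  then have "c * (ell ^ t * m) \<in> W (t * mu)" unfolding W_def by (rule spn_smult[OF C spn_base(1)])
  then show ?case by (simp add: ac_simps)
next
  case (spn_add x y) then show ?case unfolding W_def by (simp add: distrib_left spn.spn_add)
qed

lemma basis_card: "finite (setmul (Mon X b) RedG) \<and> card (setmul (Mon X b) RedG) \<le> (b + 1) ^ card X * (\<Prod>g\<in>G. n g)"
proof -
  have eq: "setmul (Mon X b) RedG = (\<lambda>(x, y). x * y) ` (Mon X b \<times> RedG)" unfolding setmul_def by auto
  have finR: "finite RedG" unfolding RedG_def using finG by (auto intro: finite_PiE)
  have cR: "card RedG \<le> (\<Prod>g\<in>G. n g)"
  proof -
    have "card RedG \<le> card (PiE G (\<lambda>g. {..<n g}))" unfolding RedG_def using finG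
      by (intro card_image_le finite_PiE) auto
    also have "\<dots> = (\<Prod>g\<in>G. n g)" using finG by (simp add: card_PiE)
    finally show ?thesis .
  qed
  have "card (setmul (Mon X b) RedG) \<le> card (Mon X b \<times> RedG)" unfolding eq
    by (rule card_image_le) (simp add: finite_Mon[OF finX] finR)
  also have "\<dots> = card (Mon X b) * card RedG" by (simp add: card_cartesian_product)
  also have "\<dots> \<le> (b + 1) ^ card X * (\<Prod>g\<in>G. n g)" using card_Mon[OF finX] cR by (intro mult_mono) auto
  finally show ?thesis using eq finite_Mon[OF finX] finR by simp
qed

end

context keyd
begin

lemma key_bound:
  assumes finZ: "finite Z" and Zsub: "Z \<subseteq> fracs F (X \<union> G)" and indZ: "indepM F Z"
  shows "card Z \<le> card X"
proof (rule ccontr)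
  assume "\<not> card Z \<le> card X"
  then have sr: "card X + 1 \<le> card Z" by simp
  obtain d q p where q: "q \<in> Pt F (X \<union> G) d" "q \<noteq> 0"
    and p: "\<forall>z\<in>Z. p z \<in> Pt F (X \<union> G) d \<and> z = p z / q"
    using common_denom[OF C finZ Zsub] by blast
  define s where "s = card Z"
  define r where "r = card X"
  define NN where "NN = (\<Prod>g\<in>G. n g)"
  define c0 where "c0 = d * s * mu + 1"
  define D where "D = NN * c0 ^ r"
  define S where "S = s * D"
  define E where "E = expo Z D"
  define v where "v e = ell ^ (d * S) * (q ^ S * mnm Z e)" for e
  define B where "B = setmul (Mon X (d * S * mu)) RedG"
  have vW: "\<forall>e\<in>E. v e \<in> spn F B"
  proof
    fix e assume e: "e \<in> E"
    have le: "(\<Sum>z\<in>Z. e z) \<le> S"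
    proof -
      have "\<forall>z\<in>Z. e z \<le> D" using e unfolding E_def expo_def by (auto simp: PiE_def Pi_def)
      then have "(\<Sum>z\<in>Z. e z) \<le> of_nat (card Z) * D" by (intro sum_bounded_above) auto
      then have "(\<Sum>z\<in>Z. e z) \<le> card Z * D" by simp
      then show ?thesis unfolding S_def s_def by simp
    qed
    have pz: "z * q = p z" if "z \<in> Z" for z
      using p that q(2) by (metis nonzero_eq_divide_eq)
    have "mnm Z e * q ^ (\<Sum>z\<in>Z. e z) = (\<Prod>z\<in>Z. (z * q) ^ e z)"
      unfolding mnm_def power_sum by (simp add: prod.distrib[symmetric] power_mult_distrib)
    also have "\<dots> = (\<Prod>z\<in>Z. p z ^ e z)" using pz by (intro prod.cong) auto
    finally have m1: "mnm Z e * q ^ (\<Sum>z\<in>Z. e z) = (\<Prod>z\<in>Z. p z ^ e z)" .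
    have "q ^ S = q ^ (S - (\<Sum>z\<in>Z. e z)) * q ^ (\<Sum>z\<in>Z. e z)"
      using le by (simp flip: power_add)
    then have eq: "q ^ S * mnm Z e = q ^ (S - (\<Sum>z\<in>Z. e z)) * (\<Prod>z\<in>Z. p z ^ e z)"
      using m1 by (simp add: ac_simps)
    have "q ^ (S - (\<Sum>z\<in>Z. e z)) * (\<Prod>z\<in>Z. p z ^ e z) \<in> Pt F (X \<union> G) (d * (S - (\<Sum>z\<in>Z. e z)) + d * (\<Sum>z\<in>Z. e z))"
      by (rule Pt_mult[OF C Pt_power[OF C q(1)] Pt_prod_power[OF C finZ]]) (use p in blast)
    moreover have "d * (S - (\<Sum>z\<in>Z. e z)) + d * (\<Sum>z\<in>Z. e z) = d * S"
      using le by (simp add: add_mult_distrib2[symmetric])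
    ultimately have "q ^ S * mnm Z e \<in> Pt F (X \<union> G) (d * S)" using eq by simp
    then have "ell ^ (d * S) * (q ^ S * mnm Z e) \<in> W (d * S * mu)" by (rule Pt_W)
    then show "v e \<in> spn F B" unfolding v_def B_def W_def .
  qed
  have NN1: "NN \<ge> 1" unfolding NN_def using n1 by (intro prod_ge_1) auto
  have finB: "finite B" and cB: "card B \<le> (d * S * mu + 1) ^ r * NN"
    using basis_card[of "d * S * mu"] unfolding B_def r_def NN_def by auto
  have finE: "finite E" unfolding E_def by (rule finite_expo[OF finZ])
  have cE: "card E = (D + 1) ^ s" unfolding E_def s_def by (rule card_expo[OF finZ])
  have ineq: "card B < card E"
  proof -
    have a1: "d * S * mu + 1 \<le> c0 * (D + 1)"
      unfolding S_def c0_def by (simp add: algebra_simps)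
    have "card B \<le> (c0 * (D + 1)) ^ r * NN"
      using cB a1 by (meson le_trans mult_le_cancel2 power_mono zero_le)
    also have "\<dots> = (NN * c0 ^ r) * (D + 1) ^ r" unfolding power_mult_distrib by (simp only: ac_simps)
    also have "\<dots> = D * (D + 1) ^ r" unfolding D_def ..
    also have "\<dots> < (D + 1) * (D + 1) ^ r" by simp
    also have "\<dots> = (D + 1) ^ (r + 1)" by simp
    also have "\<dots> \<le> (D + 1) ^ s" using sr unfolding r_def s_def by (intro power_increasing) auto
    finally show ?thesis using cE by simp
  qed
  obtain k where k: "\<forall>e\<in>E. k e \<in> F" "\<exists>e\<in>E. k e \<noteq> 0" "(\<Sum>e\<in>E. k e * v e) = 0"
    using lin_dep[OF Fs finB finE ineq vW] by blast
  have "(\<Sum>e\<in>E. k e * v e) = ell ^ (d * S) * q ^ S * (\<Sum>e\<in>E. k e * mnm Z e)"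
    unfolding v_def by (simp add: sum_distrib_left ac_simps)
  then have "(\<Sum>e\<in>E. k e * mnm Z e) = 0" using k(3) ell_nz q(2) by simp
  then have "\<forall>e\<in>E. k e = 0" using indepMD[OF indZ k(1)[unfolded E_def]] unfolding E_def by blast
  then show False using k(2) by blast
qed

end

lemma ring_gen_subring: "is_subring (ring_gen A)"
  unfolding ring_gen_def is_subring_def by blast

lemma ring_gen_least: "is_subring S \<Longrightarrow> A \<subseteq> S \<Longrightarrow> ring_gen A \<subseteq> S"
  unfolding ring_gen_def by blast

lemma ring_gen_incl: "A \<subseteq> ring_gen A"
  unfolding ring_gen_def by blast

lemma ring_gen_mono: "A \<subseteq> B \<Longrightarrow> ring_gen A \<subseteq> ring_gen B"
  by (meson order_trans ring_gen_incl ring_gen_least ring_gen_subring)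

lemma preimage_subring:
  assumes "rhom \<phi>" "is_subring T"
  shows "is_subring {x. \<phi> x \<in> T}"
  using assms(2) unfolding is_subring_def
  by (simp add: rhom_zero[OF assms(1)] rhom_one[OF assms(1)] rhom_add[OF assms(1)]
      rhom_mult[OF assms(1)] rhom_uminus[OF assms(1)])

lemma hom_ring_gen:
  assumes "rhom \<phi>"
  shows "\<phi> ` ring_gen A \<subseteq> ring_gen (\<phi> ` A)"
proof -
  have "ring_gen A \<subseteq> {x. \<phi> x \<in> ring_gen (\<phi> ` A)}"
    by (rule ring_gen_least[OF preimage_subring[OF assms ring_gen_subring]]) (use ring_gen_incl in blast)
  then show ?thesis by blast
qed

lemma indepM_empty: "is_subring C \<Longrightarrow> indepM C {}"
  unfolding indepM_def expo_def mnm_def by simp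

lemma indepM_no_zero:
  assumes C: "is_subring C" and ind: "indepM C Y"
  shows "0 \<notin> Y"
proof
  assume z: "0 \<in> Y"
  have fin: "finite Y" using ind unfolding indepM_def by simp
  define e0 where "e0 = restrict (\<lambda>y. if y = 0 then 1 else 0::nat) Y"
  have e0E: "e0 \<in> expo Y 1" unfolding e0_def expo_def by auto
  define k where "k e = (if e = e0 then (1::'a) else 0)" for e :: "'a \<Rightarrow> nat"
  have m0: "mnm Y e0 = 0"
    unfolding mnm_def e0_def using fin z by (intro prod_zero) auto
  have "(\<Sum>e\<in>expo Y 1. k e * mnm Y e) = (\<Sum>e\<in>expo Y 1. if e = e0 then mnm Y e else 0)"
    unfolding k_def by (intro sum.cong) auto
  also have "\<dots> = mnm Y e0" using e0E finite_expo[OF fin] by (simp add: sum.delta')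
  also have "\<dots> = 0" using m0 by simp
  finally have s: "(\<Sum>e\<in>expo Y 1. k e * mnm Y e) = 0" .
  have kC: "\<forall>e\<in>expo Y 1. k e \<in> C" unfolding k_def using subringD[OF C] by auto
  have "k e0 = 0" by (rule indepMD[OF ind kC s e0E])
  then show False unfolding k_def by simp
qed

definition algd :: "'f::field set \<Rightarrow> 'f set \<Rightarrow> 'f \<Rightarrow> bool" where
  "algd F Y g \<longleftrightarrow> (\<exists>n \<delta> a. n \<ge> 1 \<and> (\<forall>j\<le>n. a j \<in> spn F (Mon Y \<delta>)) \<and> a n \<noteq> 0 \<and> (\<Sum>j\<le>n. a j * g ^ j) = 0)"

lemma algd_mono:
  assumes "algd F Y g" "finite Y'" "Y \<subseteq> Y'"
  shows "algd F Y' g"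
  using assms(1) spn_mono[OF Mon_sub[OF assms(2,3)]] unfolding algd_def by meson

lemma algd_mem:
  assumes F: "is_subfield F" and fin: "finite Y" and g: "g \<in> Y"
  shows "algd F Y g"
proof -
  have C: "is_subring F" using F by (rule subfield_subring)
  define a where "a j = (if j = 0 then - g else 1)" for j :: nat
  have "a j \<in> spn F (Mon Y 1)" for j
  proof (cases "j = 0")
    case True then show ?thesis unfolding a_def using spn_uminus[OF C spn_baseI[OF C var_Mon[OF fin g]]] by simp
  next
    case False then show ?thesis unfolding a_def using spn_baseI[OF C Mon_mono[of 0 1 Y, THEN subsetD, OF _ one_Mon]] by simp
  qed
  moreover have "(\<Sum>j\<le>1. a j * g ^ j) = 0" unfolding a_def by simp
  moreover have "a 1 \<noteq> 0" unfolding a_def by simp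
  ultimately show ?thesis unfolding algd_def by (intro exI[of _ 1] exI[of _ 1] exI[of _ a]) auto
qed

lemma key_wrap:
  fixes F :: "'f::field set"
  assumes F: "is_subfield F" and finY: "finite Y" and finG: "finite G"
    and alg: "\<forall>g\<in>G. algd F Y g"
    and finZ: "finite Z" and Zsub: "Z \<subseteq> fracs F (Y \<union> G)" and indZ: "indepM F Z"
  shows "card Z \<le> card Y"
proof -
  have "\<forall>g\<in>G. \<exists>n \<delta> a. n \<ge> 1 \<and> (\<forall>j\<le>n. a j \<in> spn F (Mon Y \<delta>)) \<and> a n \<noteq> 0 \<and> (\<Sum>j\<le>n. a j * g ^ j) = 0"
    using alg unfolding algd_def by blast
  then obtain n \<delta> a where nda: "\<forall>g\<in>G. n g \<ge> 1 \<and> (\<forall>j\<le>n g. a g j \<in> spn F (Mon Y (\<delta> g))) \<and> a g (n g) \<noteq> 0 \<and> (\<Sum>j\<le>n g. a g j * g ^ j) = 0"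
    by metis
  define \<Delta> where "\<Delta> = (\<Sum>g\<in>G. \<delta> g)"
  have le: "\<delta> g \<le> \<Delta>" if "g \<in> G" for g unfolding \<Delta>_def using finG that by (intro member_le_sum) auto
  interpret keyd F Y G n a \<Delta>
  proof
    show "is_subfield F" "finite Y" "finite G" by fact+
    fix g assume g: "g \<in> G"
    show "n g \<ge> 1" "a g (n g) \<noteq> 0" "(\<Sum>j\<le>n g. a g j * g ^ j) = 0" using nda g by auto
    fix j assume "j \<le> n g"
    then have "a g j \<in> spn F (Mon Y (\<delta> g))" using nda g by auto
    then show "a g j \<in> spn F (Mon Y \<Delta>)" using spn_mono[OF Mon_mono[OF le[OF g]]] by blast
  qed
  show ?thesis by (rule key_bound[OF finZ Zsub indZ])
qed

definition iota :: "'d::idom \<Rightarrow> 'd fract" where "iota x = Fract x 1"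

lemma iota_hom: "rhom iota"
  unfolding rhom_def iota_def by (simp add: One_fract_def)

lemma iota_inj: "inj iota"
  unfolding inj_def iota_def by (simp add: eq_fract)

lemma iota_zero_iff: "iota x = 0 \<longleftrightarrow> x = 0"
  using iota_inj rhom_zero[OF iota_hom] by (metis injD)

lemma Fract_iota: "b \<noteq> 0 \<Longrightarrow> Fract a b = iota a / iota b"
  unfolding iota_def by simp

lemma iota_in_frac: "1 \<in> A \<Longrightarrow> x \<in> A \<Longrightarrow> iota x \<in> frac_of A"
  unfolding frac_of_def iota_def using one_neq_zero by blast

locale dsetup =
  fixes K :: "'d::idom set" and \<sigma> :: "'d \<Rightarrow> 'd"
  assumes K_field: "is_subfield K" and \<sigma>_endo: "ring_endo \<sigma>" and \<sigma>_K: "\<sigma> ` K \<subseteq> K"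
begin

definition F where "F = iota ` K"

lemma KC: "is_subring K" using K_field by (rule subfield_subring)

lemma F_field: "is_subfield F"
  unfolding is_subfield_def is_subring_def
proof (intro conjI ballI impI)
  show "0 \<in> F" unfolding F_def using subringD(1)[OF KC] rhom_zero[OF iota_hom] by (metis image_eqI)
  show "1 \<in> F" unfolding F_def using subringD(2)[OF KC] rhom_one[OF iota_hom] by (metis image_eqI)
  fix x y assume x: "x \<in> F" and y: "y \<in> F"
  then obtain x' y' where xy: "x' \<in> K" "y' \<in> K" "x = iota x'" "y = iota y'" unfolding F_def by auto
  show "x + y \<in> F" unfolding F_def xy rhom_add[OF iota_hom, symmetric] using subringD(3)[OF KC xy(1,2)] by simp
  show "x * y \<in> F" unfolding F_def xy rhom_mult[OF iota_hom, symmetric] using subringD(4)[OF KC xy(1,2)] by simp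
  show "- x \<in> F" unfolding F_def xy rhom_uminus[OF iota_hom, symmetric] using subringD(5)[OF KC xy(1)] by simp
next
  fix x assume "x \<in> F" "x \<noteq> 0"
  then obtain x' where x': "x' \<in> K" "x = iota x'" "x' \<noteq> 0" unfolding F_def using iota_zero_iff by auto
  then obtain y' where "y' \<in> K" "x' * y' = 1" using K_field unfolding is_subfield_def by blast
  then have "iota x' * iota y' = 1" using rhom_mult[OF iota_hom, of x' y'] rhom_one[OF iota_hom] by metis
  then show "\<exists>y\<in>F. x * y = 1" unfolding F_def x'(2) using \<open>y' \<in> K\<close> by blast
qed

lemma FC: "is_subring F" using F_field by (rule subfield_subring)

lemma \<sigma>_hom: "rhom \<sigma>" using \<sigma>_endo unfolding ring_endo_def rhom_def .

lemma \<sigma>_nzK: "\<forall>a\<in>K. \<sigma> a = 0 \<longrightarrow> a = 0"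
proof (intro ballI impI)
  fix a assume a: "a \<in> K" "\<sigma> a = 0"
  show "a = 0"
  proof (rule ccontr)
    assume "a \<noteq> 0"
    then obtain y where "a * y = 1" using K_field a unfolding is_subfield_def by blast
    then have "\<sigma> a * \<sigma> y = 1" using rhom_mult[OF \<sigma>_hom] rhom_one[OF \<sigma>_hom] by metis
    then show False using a by simp
  qed
qed

lemma funpow_hom: "rhom (\<sigma> ^^ i)"
proof (induction i)
  case 0 then show ?case by (simp add: rhom_def)
next
  case (Suc i)
  have "\<sigma> ^^ Suc i = \<sigma> \<circ> (\<sigma> ^^ i)" by simp
  then show ?case using rhom_comp[OF Suc \<sigma>_hom] by metis
qed

lemma funpow_K: "(\<sigma> ^^ i) ` K \<subseteq> K"
proof (induction i)
  case 0 then show ?case by simp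
next
  case (Suc i) then show ?case using \<sigma>_K by (auto simp: image_subset_iff)
qed

lemma indep_iota:
  assumes fin: "finite X"
  shows "indepM K X \<longleftrightarrow> indepM F (iota ` X)"
proof
  assume "indepM K X"
  then show "indepM F (iota ` X)" by (rule transport_fwd[OF iota_hom iota_inj]) (simp add: F_def)
next
  assume ind: "indepM F (iota ` X)"
  show "indepM K X"
    unfolding indepM_def
  proof (intro conjI fin allI impI)
    fix D k assume H: "(\<forall>e\<in>expo X D. k e \<in> K) \<and> (\<Sum>e\<in>expo X D. k e * mnm X e) = 0"
    have inj: "inj_on iota X" using iota_inj by (meson inj_on_subset subset_UNIV)
    have nz: "\<forall>a\<in>K. iota a = 0 \<longrightarrow> a = 0" using iota_zero_iff by blast
    have s0: "iota (\<Sum>e\<in>expo X D. k e * mnm X e) = 0" using H rhom_zero[OF iota_hom] by simp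
    show "\<forall>e\<in>expo X D. k e = 0"
      by (rule transport_back[OF iota_hom inj ind _ _ nz s0]) (use H F_def in auto)
  qed
qed

definition rk :: "'d set \<Rightarrow> nat" where
  "rk H = Max {card X | X. X \<subseteq> H \<and> indepM K X}"

lemma rk_set_fin: "finite H \<Longrightarrow> finite {card X | X. X \<subseteq> H \<and> indepM K X}"
proof -
  assume "finite H"
  then have "finite (card ` Pow H)" by simp
  moreover have "{card X | X. X \<subseteq> H \<and> indepM K X} \<subseteq> card ` Pow H" by auto
  ultimately show ?thesis by (rule finite_subset[rotated])
qed

lemma rk_ge: "finite H \<Longrightarrow> X \<subseteq> H \<Longrightarrow> indepM K X \<Longrightarrow> card X \<le> rk H"
  unfolding rk_def by (rule Max_ge[OF rk_set_fin]) auto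

lemma rk_basis: "finite H \<Longrightarrow> \<exists>X\<subseteq>H. indepM K X \<and> card X = rk H"
proof -
  assume fin: "finite H"
  have ne: "{card X | X. X \<subseteq> H \<and> indepM K X} \<noteq> {}" using indepM_empty[OF KC] by blast
  have "rk H \<in> {card X | X. X \<subseteq> H \<and> indepM K X}" unfolding rk_def by (rule Max_in[OF rk_set_fin[OF fin] ne])
  then show ?thesis by auto
qed

lemma basis_alg:
  assumes fin: "finite H" and XH: "X \<subseteq> H" and ind: "indepM K X" and cX: "card X = rk H" and h: "h \<in> H"
  shows "algd F (iota ` X) (iota h)"
proof -
  have finX: "finite X" using fin XH by (rule finite_subset[rotated])
  show ?thesis
  proof (cases "h \<in> X")
    case True then show ?thesis by (intro algd_mem[OF F_field]) (use finX in auto)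
  next
    case False
    have "\<not> indepM K (insert h X)"
    proof
      assume "indepM K (insert h X)"
      then have "card (insert h X) \<le> rk H" using XH h fin by (intro rk_ge) auto
      then show False using False finX cX by simp
    qed
    then have ni: "\<not> indepM F (insert (iota h) (iota ` X))" using indep_iota[of "insert h X"] finX by simp
    have hX: "iota h \<notin> iota ` X" using False iota_inj by (auto simp: inj_def)
    show ?thesis unfolding algd_def
      by (rule alg_data[OF FC _ hX _ ni]) (use finX ind indep_iota in auto)
  qed
qed

lemma ring_gen_FR:
  assumes "iota ` H \<subseteq> Y"
  shows "iota ` ring_gen (K \<union> H) \<subseteq> FR F Y"
proof -
  have "ring_gen (K \<union> H) \<subseteq> {x. iota x \<in> FR F Y}"
  proof (rule ring_gen_least[OF preimage_subring[OF iota_hom FR_subring[OF FC]]])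
    show "K \<union> H \<subseteq> {x. iota x \<in> FR F Y}"
      using assms FR_const[OF FC] FR_var[OF FC] unfolding F_def by auto
  qed
  then show ?thesis by blast
qed

lemma frac_of_sub:
  assumes "A \<subseteq> ring_gen (K \<union> H)" "iota ` H \<subseteq> Y"
  shows "frac_of A \<subseteq> fracs F Y"
proof
  fix z assume "z \<in> frac_of A"
  then obtain a b where ab: "a \<in> A" "b \<in> A" "b \<noteq> 0" "z = Fract a b" unfolding frac_of_def by auto
  have "iota a \<in> FR F Y" "iota b \<in> FR F Y" using ring_gen_FR[OF assms(2)] assms(1) ab by auto
  moreover have "iota b \<noteq> 0" using ab(3) iota_zero_iff by blast
  moreover have "z = iota a / iota b" using ab Fract_iota by simp
  ultimately show "z \<in> fracs F Y" unfolding fracs_def by blast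
qed

lemma upper_gen:
  assumes finH: "finite H" and finX: "finite X1" and alg: "\<forall>h\<in>H. algd F (iota ` X1) (iota h)"
    and A: "A \<subseteq> ring_gen (K \<union> H)" and finZ: "finite Z" and Z: "Z \<subseteq> frac_of A" and indZ: "indepM F Z"
  shows "card Z \<le> card X1"
proof -
  have "Z \<subseteq> fracs F (iota ` X1 \<union> iota ` H)" using Z frac_of_sub[OF A, of "iota ` X1 \<union> iota ` H"] by auto
  then have "card Z \<le> card (iota ` X1)"
    by (intro key_wrap[OF F_field _ _ _ finZ _ indZ]) (use finX finH alg in auto)
  also have "\<dots> = card X1" by (rule card_image[OF inj_on_subset[OF iota_inj subset_UNIV]])
  finally show ?thesis .
qed

lemma upper:
  assumes finH: "finite H" and A: "A \<subseteq> ring_gen (K \<union> H)" and finZ: "finite Z"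
    and Z: "Z \<subseteq> frac_of A" and indZ: "indepM F Z"
  shows "card Z \<le> rk H"
proof -
  obtain X where X: "X \<subseteq> H" "indepM K X" "card X = rk H" using rk_basis[OF finH] by blast
  have "\<forall>h\<in>H. algd F (iota ` X) (iota h)" using basis_alg[OF finH X] by blast
  moreover have "finite X" using finH X(1) by (rule finite_subset[rotated])
  ultimately have "card Z \<le> card X" using upper_gen[OF finH _ _ A finZ Z indZ] by blast
  then show ?thesis using X(3) by simp
qed

lemma lower_frac:
  assumes "X \<subseteq> ring_gen (K \<union> H)" "indepM K X"
  shows "iota ` X \<subseteq> frac_of (ring_gen (K \<union> H)) \<and> indepM F (iota ` X) \<and> card (iota ` X) = card X"
proof -
  have fin: "finite X" using assms(2) unfolding indepM_def by simp
  have "1 \<in> ring_gen (K \<union> H)" using subringD(2)[OF ring_gen_subring] .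
  then have one: "1 \<in> ring_gen (K \<union> H)" .
  show ?thesis
  proof (intro conjI)
    show "iota ` X \<subseteq> frac_of (ring_gen (K \<union> H))" using iota_in_frac[OF one] assms(1) by blast
    show "indepM F (iota ` X)" using indep_iota[OF fin] assms(2) by blast
    show "card (iota ` X) = card X" by (rule card_image[OF inj_on_subset[OF iota_inj subset_UNIV]])
  qed
qed

lemma trdeg_eq:
  assumes finH: "finite H"
  shows "trdeg F (frac_of (ring_gen (K \<union> H))) = rk H"
proof -
  let ?S = "{card X | X. X \<subseteq> frac_of (ring_gen (K \<union> H)) \<and> alg_indep F X}"
  have ub: "\<forall>c\<in>?S. c \<le> rk H"
  proof
    fix c assume "c \<in> ?S"
    then obtain Z where Z: "c = card Z" "Z \<subseteq> frac_of (ring_gen (K \<union> H))" "alg_indep F Z" by auto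
    have "finite Z" using Z(3) unfolding alg_indep_def by simp
    moreover have "indepM F Z" using alg_indep_imp_indepM[OF FC Z(3)] .
    ultimately show "c \<le> rk H" using upper[OF finH order_refl _ Z(2)] Z(1) by simp
  qed
  obtain X where X: "X \<subseteq> H" "indepM K X" "card X = rk H" using rk_basis[OF finH] by blast
  have XR: "X \<subseteq> ring_gen (K \<union> H)" using X(1) ring_gen_incl by blast
  have l: "iota ` X \<subseteq> frac_of (ring_gen (K \<union> H)) \<and> indepM F (iota ` X) \<and> card (iota ` X) = card X"
    by (rule lower_frac[OF XR X(2)])
  then have "alg_indep F (iota ` X)" using indepM_imp_alg_indep[OF FC] by blast
  then have "rk H \<in> ?S" using l X(3) by (intro CollectI exI[of _ "iota ` X"]) auto
  then show ?thesis unfolding trdeg_def using ub by (intro cSup_eq_maximum) auto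
qed

lemma rk_union:
  assumes finH: "finite H" and finH': "finite H'"
  shows "rk (H \<union> H') \<le> rk H + rk H'"
proof -
  obtain X where X: "X \<subseteq> H" "indepM K X" "card X = rk H" using rk_basis[OF finH] by blast
  obtain X' where X': "X' \<subseteq> H'" "indepM K X'" "card X' = rk H'" using rk_basis[OF finH'] by blast
  obtain Xb where Xb: "Xb \<subseteq> H \<union> H'" "indepM K Xb" "card Xb = rk (H \<union> H')"
    using rk_basis[of "H \<union> H'"] finH finH' by blast
  have finX: "finite (X \<union> X')" using X(1) X'(1) finH finH' by (meson finite_Un finite_subset)
  have alg: "\<forall>h\<in>H \<union> H'. algd F (iota ` (X \<union> X')) (iota h)"
  proof
    fix h assume "h \<in> H \<union> H'"
    then show "algd F (iota ` (X \<union> X')) (iota h)"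
    proof
      assume "h \<in> H"
      then have "algd F (iota ` X) (iota h)" using basis_alg[OF finH X] by blast
      then show ?thesis by (rule algd_mono) (use finX in auto)
    next
      assume "h \<in> H'"
      then have "algd F (iota ` X') (iota h)" using basis_alg[OF finH' X'] by blast
      then show ?thesis by (rule algd_mono) (use finX in auto)
    qed
  qed
  have XbR: "Xb \<subseteq> ring_gen (K \<union> (H \<union> H'))" using Xb(1) ring_gen_incl by blast
  have l: "iota ` Xb \<subseteq> frac_of (ring_gen (K \<union> (H \<union> H'))) \<and> indepM F (iota ` Xb) \<and> card (iota ` Xb) = card Xb"
    by (rule lower_frac[OF XbR Xb(2)])
  have finXb: "finite Xb" using Xb(2) unfolding indepM_def by simp
  have "card (iota ` Xb) \<le> card (X \<union> X')"
    by (rule upper_gen[OF _ finX alg order_refl]) (use l finH finH' finXb in auto)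
  also have "\<dots> \<le> card X + card X'" by (rule card_Un_le)
  finally show ?thesis using l Xb X X' by simp
qed

lemma rk_sigma:
  assumes finH: "finite H"
  shows "rk (\<sigma> ` H) \<le> rk H \<and> ((\<exists>p\<in>ring_gen (K \<union> H). p \<noteq> 0 \<and> \<sigma> p = 0) \<longrightarrow> rk (\<sigma> ` H) < rk H)"
proof -
  obtain Y where Y: "Y \<subseteq> \<sigma> ` H" "indepM K Y" "card Y = rk (\<sigma> ` H)" using rk_basis[of "\<sigma> ` H"] finH by auto
  define X1 where "X1 = inv_into H \<sigma> ` Y"
  have iv: "inv_into H \<sigma> y \<in> H \<and> \<sigma> (inv_into H \<sigma> y) = y" if "y \<in> Y" for y
  proof -
    have "y \<in> \<sigma> ` H" using Y(1) that by blast
    then show ?thesis by (simp add: inv_into_into f_inv_into_f)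
  qed
  have X1H: "X1 \<subseteq> H" unfolding X1_def using iv by blast
  have sX1: "\<sigma> ` X1 = Y"
  proof
    show "\<sigma> ` X1 \<subseteq> Y" unfolding X1_def using iv by auto
    show "Y \<subseteq> \<sigma> ` X1"
    proof
      fix y assume "y \<in> Y"
      then have "y = \<sigma> (inv_into H \<sigma> y)" "inv_into H \<sigma> y \<in> X1" using iv unfolding X1_def by auto
      then show "y \<in> \<sigma> ` X1" by blast
    qed
  qed
  have injX1: "inj_on \<sigma> X1"
  proof (rule inj_onI)
    fix x1 x2 assume "x1 \<in> X1" "x2 \<in> X1" "\<sigma> x1 = \<sigma> x2"
    then obtain y1 y2 where "y1 \<in> Y" "y2 \<in> Y" "x1 = inv_into H \<sigma> y1" "x2 = inv_into H \<sigma> y2"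
      unfolding X1_def by auto
    then show "x1 = x2" using iv \<open>\<sigma> x1 = \<sigma> x2\<close> by metis
  qed
  have finX1: "finite X1" using finH X1H by (rule finite_subset[rotated])
  have cX1: "card X1 = rk (\<sigma> ` H)" using Y(3) sX1 card_image[OF injX1] by simp
  have indY: "indepM K (\<sigma> ` X1)" using Y(2) sX1 by simp
  have indX1: "indepM K X1"
    unfolding indepM_def
  proof (intro conjI finX1 allI impI)
    fix D k assume H: "(\<forall>e\<in>expo X1 D. k e \<in> K) \<and> (\<Sum>e\<in>expo X1 D. k e * mnm X1 e) = 0"
    have s0: "\<sigma> (\<Sum>e\<in>expo X1 D. k e * mnm X1 e) = 0" using H rhom_zero[OF \<sigma>_hom] by simp
    show "\<forall>e\<in>expo X1 D. k e = 0"
      by (rule transport_back[OF \<sigma>_hom injX1 indY _ \<sigma>_K \<sigma>_nzK s0]) (use H in auto)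
  qed
  have le: "rk (\<sigma> ` H) \<le> rk H" using rk_ge[OF finH X1H indX1] cX1 by simp
  have strict: "rk (\<sigma> ` H) < rk H" if p: "p \<in> ring_gen (K \<union> H)" "p \<noteq> 0" "\<sigma> p = 0" for p
  proof -
    have "p \<notin> X1"
    proof
      assume "p \<in> X1"
      then have "0 \<in> Y" using sX1 p(3) by force
      then show False using indepM_no_zero[OF KC Y(2)] by simp
    qed
    have ind: "indepM K (insert p X1)"
      by (rule indep_insert_kernel[OF \<sigma>_hom finX1 injX1 indY \<sigma>_K \<sigma>_nzK \<open>p \<notin> X1\<close> p(2,3)])
    have sub: "insert p X1 \<subseteq> ring_gen (K \<union> H)" using p(1) X1H ring_gen_incl by blast
    have l: "iota ` insert p X1 \<subseteq> frac_of (ring_gen (K \<union> H)) \<and> indepM F (iota ` insert p X1) \<and> card (iota ` insert p X1) = card (insert p X1)"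
      by (rule lower_frac[OF sub ind])
    have "card (iota ` insert p X1) \<le> rk H"
      by (rule upper[OF finH order_refl]) (use l finX1 in auto)
    then have "card X1 + 1 \<le> rk H" using l \<open>p \<notin> X1\<close> finX1 by simp
    then show ?thesis using cX1 by simp
  qed
  show ?thesis using le strict by blast
qed

end

lemma comb1:
  fixes h :: "nat \<Rightarrow> nat"
  assumes H: "\<forall>m\<ge>1. \<exists>N0. \<forall>N\<ge>N0. h (m + N) + m \<le> h m + h N"
  shows False
proof -
  have main: "\<forall>m\<ge>1. j * m \<le> h m" for j
  proof (induction j)
    case 0 then show ?case by simp
  next
    case (Suc j)
    show ?case
    proof (intro allI impI)
      fix m :: nat assume m1: "m \<ge> 1"
      obtain N0 where N0: "\<forall>N\<ge>N0. h (m + N) + m \<le> h m + h N" using H m1 by blast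
      define N where "N = N0 + 1"
      have iter: "h (N + k * m) + k * m \<le> h N + k * h m" for k
      proof (induction k)
        case 0 then show ?case by simp
      next
        case (Suc k)
        have "N + k * m \<ge> N0" unfolding N_def by simp
        then have "h (m + (N + k * m)) + m \<le> h m + h (N + k * m)" using N0 by blast
        moreover have "m + (N + k * m) = N + Suc k * m" by simp
        ultimately have "h (N + Suc k * m) + m \<le> h m + h (N + k * m)" by simp
        then show ?case using Suc.IH by simp
      qed
      show "Suc j * m \<le> h m"
      proof (rule ccontr)
        assume "\<not> Suc j * m \<le> h m"
        then have hm: "h m + 1 \<le> Suc j * m" by simp
        define k where "k = h N + 1"
        have "N + k * m \<ge> 1" unfolding N_def by simp
        then have i1: "j * (N + k * m) \<le> h (N + k * m)" using Suc.IH by blast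
        have i2: "h (N + k * m) + k * m \<le> h N + k * h m" by (rule iter)
        have i3: "k * (h m + 1) \<le> k * (Suc j * m)" using hm by (rule mult_le_mono2)
        have "j * N + j * (k * m) + k * m + k \<le> h N + k * h m + k"
          using i1 i2 by (simp add: algebra_simps)
        also have "\<dots> \<le> h N + k * (Suc j * m)" using i3 by (simp add: algebra_simps)
        also have "\<dots> = h N + j * (k * m) + k * m" by (simp add: algebra_simps)
        finally have "j * N + k \<le> h N" by simp
        then show False unfolding k_def by simp
      qed
    qed
  qed
  have "\<forall>m\<ge>1. (h 1 + 1) * m \<le> h m" by (rule main)
  then have "(h 1 + 1) * 1 \<le> h 1" by blast
  then show False by simp
qed

locale dfin = dsetup +
  fixes S :: "'a set"
  assumes finS: "finite S"
    and gen: "ring_gen (\<Union>i. (\<sigma> ^^ i) ` ring_gen (K \<union> S)) = UNIV"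
begin

definition Gm :: "nat \<Rightarrow> 'a set" where "Gm m = (\<Union>i<m. (\<sigma> ^^ i) ` S)"
definition hh :: "nat \<Rightarrow> nat" where "hh m = rk (Gm m)"
definition wit :: "nat \<Rightarrow> 'a set \<Rightarrow> bool" where
  "wit n H \<longleftrightarrow> (\<exists>p\<in>ring_gen (K \<union> (\<sigma> ^^ n) ` H). p \<noteq> 0 \<and> \<sigma> p = 0)"

lemma finGm: "finite (Gm m)" unfolding Gm_def using finS by simp

lemma Gm_mono: "m \<le> m' \<Longrightarrow> Gm m \<subseteq> Gm m'" unfolding Gm_def by (intro UN_mono) auto

lemma funpow_ring_gen: "(\<sigma> ^^ i) ` ring_gen (K \<union> H) \<subseteq> ring_gen (K \<union> (\<sigma> ^^ i) ` H)"
proof -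
  have "(\<sigma> ^^ i) ` ring_gen (K \<union> H) \<subseteq> ring_gen ((\<sigma> ^^ i) ` (K \<union> H))" by (rule hom_ring_gen[OF funpow_hom])
  also have "\<dots> \<subseteq> ring_gen (K \<union> (\<sigma> ^^ i) ` H)" using funpow_K[of i] by (intro ring_gen_mono) auto
  finally show ?thesis .
qed

lemma Rm_eq:
  assumes "m \<ge> 1"
  shows "R_m \<sigma> (ring_gen (K \<union> S)) m = ring_gen (K \<union> Gm m)"
proof
  show "R_m \<sigma> (ring_gen (K \<union> S)) m \<subseteq> ring_gen (K \<union> Gm m)"
    unfolding R_m_def
  proof (rule ring_gen_least[OF ring_gen_subring])
    show "(\<Union>i<m. (\<sigma> ^^ i) ` ring_gen (K \<union> S)) \<subseteq> ring_gen (K \<union> Gm m)"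
    proof (rule UN_least)
      fix i assume "i \<in> {..<m}"
      have "(\<sigma> ^^ i) ` ring_gen (K \<union> S) \<subseteq> ring_gen (K \<union> (\<sigma> ^^ i) ` S)" by (rule funpow_ring_gen)
      also have "\<dots> \<subseteq> ring_gen (K \<union> Gm m)" using \<open>i \<in> {..<m}\<close> unfolding Gm_def by (intro ring_gen_mono) auto
      finally show "(\<sigma> ^^ i) ` ring_gen (K \<union> S) \<subseteq> ring_gen (K \<union> Gm m)" .
    qed
  qed
  show "ring_gen (K \<union> Gm m) \<subseteq> R_m \<sigma> (ring_gen (K \<union> S)) m"
    unfolding R_m_def
  proof (rule ring_gen_mono)
    have "K \<subseteq> (\<sigma> ^^ 0) ` ring_gen (K \<union> S)" using ring_gen_incl[of "K \<union> S"] by auto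
    moreover have "(\<sigma> ^^ i) ` S \<subseteq> (\<sigma> ^^ i) ` ring_gen (K \<union> S)" for i using ring_gen_incl by blast
    ultimately show "K \<union> Gm m \<subseteq> (\<Union>i<m. (\<sigma> ^^ i) ` ring_gen (K \<union> S))"
      unfolding Gm_def using assms by fastforce
  qed
qed

lemma dim_c_eq: "m \<ge> 1 \<Longrightarrow> dim_c K \<sigma> (ring_gen (K \<union> S)) m = hh m"
proof -
  assume m: "m \<ge> 1"
  have ii: "(\<lambda>x. Fract x 1) = iota" by (simp add: iota_def fun_eq_iff)
  show ?thesis unfolding dim_c_def ii Rm_eq[OF m] hh_def F_def[symmetric] by (rule trdeg_eq[OF finGm])
qed

lemma Gm_add: "Gm (m + N) = Gm m \<union> (\<sigma> ^^ m) ` Gm N"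
proof
  show "Gm (m + N) \<subseteq> Gm m \<union> (\<sigma> ^^ m) ` Gm N"
  proof
    fix x assume "x \<in> Gm (m + N)"
    then obtain i s where isx: "i < m + N" "s \<in> S" "x = (\<sigma> ^^ i) s" unfolding Gm_def by auto
    show "x \<in> Gm m \<union> (\<sigma> ^^ m) ` Gm N"
    proof (cases "i < m")
      case True then show ?thesis using isx unfolding Gm_def by auto
    next
      case False
      then obtain j where j: "i = m + j" "j < N" using isx(1) by (metis add_less_cancel_left le_Suc_ex not_less)
      then have "x = (\<sigma> ^^ m) ((\<sigma> ^^ j) s)" using isx by (simp add: funpow_add)
      moreover have "(\<sigma> ^^ j) s \<in> Gm N" using j isx unfolding Gm_def by auto
      ultimately show ?thesis by blast
    qed
  qed
  show "Gm m \<union> (\<sigma> ^^ m) ` Gm N \<subseteq> Gm (m + N)"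
  proof
    fix x assume "x \<in> Gm m \<union> (\<sigma> ^^ m) ` Gm N"
    then show "x \<in> Gm (m + N)"
    proof
      assume "x \<in> Gm m" then show ?thesis using Gm_mono[of m "m + N"] by auto
    next
      assume "x \<in> (\<sigma> ^^ m) ` Gm N"
      then obtain j s where "j < N" "s \<in> S" "x = (\<sigma> ^^ m) ((\<sigma> ^^ j) s)" unfolding Gm_def by auto
      then have "x = (\<sigma> ^^ (m + j)) s" "m + j < m + N" by (simp_all add: funpow_add)
      then show ?thesis using \<open>s \<in> S\<close> unfolding Gm_def by blast
    qed
  qed
qed

lemma chain:
  assumes finH: "finite H"
  shows "rk ((\<sigma> ^^ m) ` H) + card {n. n < m \<and> wit n H} \<le> rk H"
proof (induction m)
  case 0 then show ?case by simp
next
  case (Suc m)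
  have fin: "finite ((\<sigma> ^^ m) ` H)" using finH by simp
  have img: "\<sigma> ` (\<sigma> ^^ m) ` H = (\<sigma> ^^ Suc m) ` H" by (simp add: image_comp)
  have rs: "rk ((\<sigma> ^^ Suc m) ` H) \<le> rk ((\<sigma> ^^ m) ` H)"
    and rs2: "wit m H \<Longrightarrow> rk ((\<sigma> ^^ Suc m) ` H) < rk ((\<sigma> ^^ m) ` H)"
    using rk_sigma[OF fin] unfolding img wit_def by auto
  show ?case
  proof (cases "wit m H")
    case True
    have "{n. n < Suc m \<and> wit n H} = insert m {n. n < m \<and> wit n H}" using True by auto
    then have "card {n. n < Suc m \<and> wit n H} = card {n. n < m \<and> wit n H} + 1" by simp
    then show ?thesis using Suc.IH rs2[OF True] by simp
  next
    case False
    have "{n. n < Suc m \<and> wit n H} = {n. n < m \<and> wit n H}" using False less_Suc_eq by auto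
    then show ?thesis using Suc.IH rs by simp
  qed
qed

lemma subadd: "hh (m + N) \<le> hh m + rk ((\<sigma> ^^ m) ` Gm N)"
  unfolding hh_def Gm_add by (rule rk_union[OF finGm]) (simp add: finGm)

lemma subadd2: "hh (m + N) \<le> hh m + hh N"
  using subadd[of m N] chain[OF finGm, of m N] unfolding hh_def by simp

lemma UNIV_union: "x \<in> ring_gen (K \<union> Gm (Suc M)) \<or> (\<exists>M. x \<in> ring_gen (K \<union> Gm (Suc M)))"
proof -
  define U where "U = {x. \<exists>M. x \<in> ring_gen (K \<union> Gm (Suc M))}"
  have mono: "x \<in> ring_gen (K \<union> Gm (Suc M1)) \<Longrightarrow> M1 \<le> M2 \<Longrightarrow> x \<in> ring_gen (K \<union> Gm (Suc M2))" for x M1 M2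
    using ring_gen_mono[of "K \<union> Gm (Suc M1)" "K \<union> Gm (Suc M2)"] Gm_mono[of "Suc M1" "Suc M2"] by auto
  have sub: "is_subring U"
    unfolding is_subring_def
  proof (intro conjI ballI)
    show "0 \<in> U" unfolding U_def using subringD(1)[OF ring_gen_subring] by blast
    show "1 \<in> U" unfolding U_def using subringD(2)[OF ring_gen_subring] by blast
    fix x y assume "x \<in> U" "y \<in> U"
    then obtain M1 M2 where "x \<in> ring_gen (K \<union> Gm (Suc M1))" "y \<in> ring_gen (K \<union> Gm (Suc M2))" unfolding U_def by auto
    then have xy: "x \<in> ring_gen (K \<union> Gm (Suc (M1 + M2)))" "y \<in> ring_gen (K \<union> Gm (Suc (M1 + M2)))"
      using mono by auto
    show "x + y \<in> U" unfolding U_def using subringD(3)[OF ring_gen_subring xy] by blast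
    show "x * y \<in> U" unfolding U_def using subringD(4)[OF ring_gen_subring xy] by blast
    show "- x \<in> U" unfolding U_def using subringD(5)[OF ring_gen_subring xy(1)] by blast
  qed
  have "(\<Union>i. (\<sigma> ^^ i) ` ring_gen (K \<union> S)) \<subseteq> U"
  proof (rule UN_least)
    fix i
    have "(\<sigma> ^^ i) ` ring_gen (K \<union> S) \<subseteq> ring_gen (K \<union> (\<sigma> ^^ i) ` S)" by (rule funpow_ring_gen)
    also have "\<dots> \<subseteq> ring_gen (K \<union> Gm (Suc i))" unfolding Gm_def by (intro ring_gen_mono) auto
    finally show "(\<sigma> ^^ i) ` ring_gen (K \<union> S) \<subseteq> U" unfolding U_def by blast
  qed
  then have "UNIV \<subseteq> U" using ring_gen_least[OF sub] gen by metis
  then show ?thesis unfolding U_def by blast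
qed

lemma witness:
  assumes ni: "\<not> inj_on \<sigma> (range (\<sigma> ^^ n))"
  shows "\<exists>M. \<forall>N\<ge>M. wit n (Gm N)"
proof -
  obtain x y where xy: "\<sigma> ((\<sigma> ^^ n) x) = \<sigma> ((\<sigma> ^^ n) y)" "(\<sigma> ^^ n) x \<noteq> (\<sigma> ^^ n) y"
    using ni unfolding inj_on_def by auto
  obtain M where M: "x - y \<in> ring_gen (K \<union> Gm (Suc M))" using UNIV_union by blast
  define p where "p = (\<sigma> ^^ n) (x - y)"
  have p0: "p \<noteq> 0" unfolding p_def rhom_diff[OF funpow_hom] using xy(2) by simp
  have sp: "\<sigma> p = 0" unfolding p_def rhom_diff[OF funpow_hom] rhom_diff[OF \<sigma>_hom] using xy(1) by simp
  have pin: "p \<in> ring_gen (K \<union> (\<sigma> ^^ n) ` Gm (Suc M))" using funpow_ring_gen M unfolding p_def by blast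
  show ?thesis
  proof (intro exI allI impI)
    fix N assume "Suc M \<le> N"
    then have "ring_gen (K \<union> (\<sigma> ^^ n) ` Gm (Suc M)) \<subseteq> ring_gen (K \<union> (\<sigma> ^^ n) ` Gm N)"
      using Gm_mono by (intro ring_gen_mono) blast
    then show "wit n (Gm N)" unfolding wit_def using pin p0 sp by blast
  qed
qed

lemma part1: "\<exists>n. inj_on \<sigma> (range (\<sigma> ^^ n))"
proof (rule ccontr)
  assume "\<not> ?thesis"
  then have "\<forall>n. \<exists>M. \<forall>N\<ge>M. wit n (Gm N)" using witness by blast
  then obtain M where M: "\<forall>n N. N \<ge> M n \<longrightarrow> wit n (Gm N)" by metis
  have "\<forall>m\<ge>1. \<exists>N0. \<forall>N\<ge>N0. hh (m + N) + m \<le> hh m + hh N"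
  proof (intro allI impI)
    fix m :: nat assume "m \<ge> 1"
    define N0 where "N0 = (\<Sum>n<m. M n)"
    show "\<exists>N0. \<forall>N\<ge>N0. hh (m + N) + m \<le> hh m + hh N"
    proof (intro exI allI impI)
      fix N assume N: "N \<ge> N0"
      have "\<forall>n<m. wit n (Gm N)"
      proof (intro allI impI)
        fix n assume "n < m"
        then have "M n \<le> N0" unfolding N0_def by (intro member_le_sum) auto
        then show "wit n (Gm N)" using M N by auto
      qed
      then have "{n. n < m \<and> wit n (Gm N)} = {..<m}" by auto
      then have "rk ((\<sigma> ^^ m) ` Gm N) + m \<le> hh N" using chain[OF finGm, of m N] unfolding hh_def by simp
      then show "hh (m + N) + m \<le> hh m + hh N" using subadd[of m N] by simp
    qed
  qed
  then show False by (rule comb1)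
qed

lemma part2:
  assumes ev: "\<forall>\<^sub>F m in sequentially. int (dim_c K \<sigma> (ring_gen (K \<union> S)) m) = a * int m + b"
  shows "\<exists>n::nat. int n \<le> b \<and> inj_on \<sigma> (range (\<sigma> ^^ n))"
proof -
  obtain m0 where m0: "\<forall>m\<ge>m0. int (dim_c K \<sigma> (ring_gen (K \<union> S)) m) = a * int m + b"
    using ev unfolding eventually_sequentially by blast
  define m1 where "m1 = m0 + 1"
  have lin: "int (hh m) = a * int m + b" if "m \<ge> m1" for m
    using m0[rule_format, of m] dim_c_eq[of m] that unfolding m1_def by simp
  have b0: "b \<ge> 0"
  proof -
    have "int (hh (m1 + m1)) \<le> int (hh m1) + int (hh m1)" using subadd2[of m1 m1] by simp
    then have "a * int (m1 + m1) + b \<le> (a * int m1 + b) + (a * int m1 + b)" using lin[of m1] lin[of "m1 + m1"] by simp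
    then show ?thesis by (simp add: algebra_simps)
  qed
  show ?thesis
  proof (rule ccontr)
    assume nt: "\<not> (\<exists>n::nat. int n \<le> b \<and> inj_on \<sigma> (range (\<sigma> ^^ n)))"
    define B where "B = nat b"
    have "\<forall>n\<le>B. \<not> inj_on \<sigma> (range (\<sigma> ^^ n))" using nt b0 unfolding B_def by auto
    then have "\<forall>n\<le>B. \<exists>M. \<forall>N\<ge>M. wit n (Gm N)" using witness by blast
    then obtain M where M: "\<forall>n\<le>B. \<forall>N\<ge>M n. wit n (Gm N)" by metis
    define N where "N = (\<Sum>n\<le>B. M n) + m1"
    define m where "m = B + 1 + m1"
    have wN: "\<forall>n\<le>B. wit n (Gm N)"
    proof (intro allI impI)
      fix n assume "n \<le> B"
      then have "M n \<le> (\<Sum>n\<le>B. M n)" by (intro member_le_sum) auto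
      then show "wit n (Gm N)" using M \<open>n \<le> B\<close> unfolding N_def by auto
    qed
    have "{..B} \<subseteq> {n. n < m \<and> wit n (Gm N)}" using wN unfolding m_def by auto
    then have "B + 1 \<le> card {n. n < m \<and> wit n (Gm N)}"
      using card_mono[of "{n. n < m \<and> wit n (Gm N)}" "{..B}"] by simp
    then have "rk ((\<sigma> ^^ m) ` Gm N) + (B + 1) \<le> hh N" using chain[OF finGm, of m N] unfolding hh_def by simp
    then have "hh (m + N) + (B + 1) \<le> hh m + hh N" using subadd[of m N] by simp
    then have "int (hh (m + N)) + int B + 1 \<le> int (hh m) + int (hh N)" by simp
    moreover have "m \<ge> m1" "N \<ge> m1" "m + N \<ge> m1" unfolding m_def N_def by auto
    ultimately have "a * int (m + N) + b + int B + 1 \<le> (a * int m + b) + (a * int N + b)"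
      using lin by metis
    then have "int B + 1 \<le> b" by (simp add: algebra_simps)
    then show False using b0 unfolding B_def by simp
  qed
qed

end

theorem lemma4p10:
  fixes K :: "'d::idom set" and \<sigma> :: "'d \<Rightarrow> 'd"
  assumes K_field: "is_subfield K"
    and \<sigma>_endo: "ring_endo \<sigma>"
    and \<sigma>_K: "\<sigma> ` K \<subseteq> K"
    and fg: "\<exists>S. finite S \<and> ring_gen (K \<union> (\<Union>i. (\<sigma> ^^ i) ` S)) = UNIV"
  shows "(\<exists>n::nat. inj_on \<sigma> (range (\<sigma> ^^ n))) \<and>
    (\<forall>R S a b. finite S \<and> R = ring_gen (K \<union> S) \<and>
        ring_gen (\<Union>i. (\<sigma> ^^ i) ` R) = UNIV \<and>
        (\<forall>\<^sub>F m in sequentially. int (dim_c K \<sigma> R m) = a * int m + b)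
      \<longrightarrow> (\<exists>n::nat. int n \<le> b \<and> inj_on \<sigma> (range (\<sigma> ^^ n))))"
proof -
  interpret dsetup K \<sigma> using K_field \<sigma>_endo \<sigma>_K by unfold_locales
  have gen_of: "ring_gen (\<Union>i. (\<sigma> ^^ i) ` ring_gen (K \<union> S)) = UNIV"
    if "ring_gen (K \<union> (\<Union>i. (\<sigma> ^^ i) ` S)) = UNIV" for S
  proof -
    let ?T = "ring_gen (K \<union> S)"
    have k0: "K \<subseteq> ?T" using ring_gen_incl[of "K \<union> S"] by simp
    have u0: "(\<sigma> ^^ 0) ` ?T \<subseteq> (\<Union>i. (\<sigma> ^^ i) ` ?T)" by (rule UN_upper) simp
    have k1: "K \<subseteq> (\<Union>i. (\<sigma> ^^ i) ` ?T)" using k0 u0 by simp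
    have s1: "(\<Union>i. (\<sigma> ^^ i) ` S) \<subseteq> (\<Union>i. (\<sigma> ^^ i) ` ?T)"
    proof (rule UN_mono)
      fix i show "(\<sigma> ^^ i) ` S \<subseteq> (\<sigma> ^^ i) ` ?T" by (rule image_mono) (use ring_gen_incl[of "K \<union> S"] in simp)
    qed simp
    have "ring_gen (K \<union> (\<Union>i. (\<sigma> ^^ i) ` S)) \<subseteq> ring_gen (\<Union>i. (\<sigma> ^^ i) ` ?T)"
      by (rule ring_gen_mono) (use k1 s1 in simp)
    then show ?thesis using that by (simp add: top.extremum_unique)
  qed
  have p1: "\<exists>n::nat. inj_on \<sigma> (range (\<sigma> ^^ n))"
  proof -
    obtain S where S: "finite S" "ring_gen (K \<union> (\<Union>i. (\<sigma> ^^ i) ` S)) = UNIV" using fg by blast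
    interpret dfin K \<sigma> S using S(1) gen_of[OF S(2)] by unfold_locales
    show ?thesis by (rule part1)
  qed
  have p2: "\<exists>n::nat. int n \<le> b \<and> inj_on \<sigma> (range (\<sigma> ^^ n))"
    if H: "finite S \<and> R = ring_gen (K \<union> S) \<and> ring_gen (\<Union>i. (\<sigma> ^^ i) ` R) = UNIV \<and>
        (\<forall>\<^sub>F m in sequentially. int (dim_c K \<sigma> R m) = a * int m + b)" for R S a b
  proof -
    note H1 = conjunct2[OF H]
    note H2 = conjunct2[OF H1]
    have fS: "finite S" by (rule conjunct1[OF H])
    have R: "R = ring_gen (K \<union> S)" by (rule conjunct1[OF H1])
    have g: "ring_gen (\<Union>i. (\<sigma> ^^ i) ` R) = UNIV" by (rule conjunct1[OF H2])
    have ev: "\<forall>\<^sub>F m in sequentially. int (dim_c K \<sigma> R m) = a * int m + b" by (rule conjunct2[OF H2])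
    interpret dfin K \<sigma> S using fS g unfolding R by unfold_locales
    have ev': "\<forall>\<^sub>F m in sequentially. int (dim_c K \<sigma> (ring_gen (K \<union> S)) m) = a * int m + b"
      using ev unfolding R .
    show ?thesis by (rule part2[OF ev'])
  qed
  show ?thesis by (intro conjI allI impI p1) (rule p2)
qed


end
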